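(* On a priori popularity instances with $n+1$ agents, the AVD mechanism whose default node $t$ is a node of highest expected in-degree (i.e. of highest popularity $p_t$) has expected additive approximation $\mathbb{E}[\Delta(\mathbf{x})-d_{w}(\mathbf{x})]=\mathcal{O}(\ln^2 n)$, where $w$ is the winner returned by AVD.
   Context: A nomination profile on a finite agent set $N$ is a directed graph $\mathbf{x}$ on $N$ without self-loops. For $S\subseteq N$ and $j\in N$, $d_j(S,\mathbf{x})=|\{i\in S:(i,j)\text{ is an edge}\}|$; $d_j(\mathbf{x})=d_j(N\setminus\{j\},\mathbf{x})$ and $\Delta(\mathbf{x})=\max_j d_j(\mathbf{x})$. A priori popularity model: with $|N|=n+1$, each node $j$ has a popularity $p_j\in[0,1]$ and each directed edge $(i,j)$, $i\neq j$, is present independently with probability $p_j$; so $d_j(\mathbf{x})\sim\mathrm{Bin}(n,p_j)$, independent across $j$. AVD (approval voting with default) with default node $t\in N$: a non-default node $k$ beats a non-default node $j$ if $d_k(N\setminus\{j,k,t\},\mathbf{x})>d_j(N\setminus\{j,k,t\},\mathbf{x})$; a non-default node $k$ beats $t$ if $d_k(N\setminus\{k,t\},\mathbf{x})>d_t(N\setminus\{k,t\},\mathbf{x})$, and $t$ beats $k$ if $d_k(N\setminus\{k,t\},\mathbf{x})<d_t(N\setminus\{k,t\},\mathbf{x})$. AVD returns as winner $w$ the node that beats every other node if such a node exists, and $t$ otherwise. *)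

theory Defs
  imports Complex_Main
begin

text \<open>Agents are N = {0..n} (so n+1 agents). A nomination profile is a set of
directed edges E :: (nat \<times> nat) set on N without self-loops.\<close>

definition agents :: "nat \<Rightarrow> nat set" where
  "agents n = {..n}"

definition all_edges :: "nat \<Rightarrow> (nat \<times> nat) set" where
  "all_edges n = {(i, j). i \<le> n \<and> j \<le> n \<and> i \<noteq> j}"

definition indeg_in :: "nat \<Rightarrow> nat set \<Rightarrow> (nat \<times> nat) set \<Rightarrow> nat" where
  "indeg_in j S E = card {i \<in> S. (i, j) \<in> E}"

definition indeg :: "nat \<Rightarrow> nat \<Rightarrow> (nat \<times> nat) set \<Rightarrow> nat" where
  "indeg n j E = indeg_in j (agents n - {j}) E"

definition max_indeg :: "nat \<Rightarrow> (nat \<times> nat) set \<Rightarrow> nat" where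
  "max_indeg n E = Max ((\<lambda>j. indeg n j E) ` agents n)"

definition avd_beats :: "nat \<Rightarrow> nat \<Rightarrow> (nat \<times> nat) set \<Rightarrow> nat \<Rightarrow> nat \<Rightarrow> bool" where
  "avd_beats n t E a b =
     (if a \<noteq> t \<and> b \<noteq> t then
        indeg_in a (agents n - {a, b, t}) E > indeg_in b (agents n - {a, b, t}) E
      else if a \<noteq> t \<and> b = t then
        indeg_in a (agents n - {a, t}) E > indeg_in t (agents n - {a, t}) E
      else if a = t \<and> b \<noteq> t then
        indeg_in b (agents n - {b, t}) E < indeg_in t (agents n - {b, t}) E
      else False)"

definition avd_winner :: "nat \<Rightarrow> nat \<Rightarrow> (nat \<times> nat) set \<Rightarrow> nat" where
  "avd_winner n t E =
     (if \<exists>k \<in> agents n. \<forall>j \<in> agents n - {k}. avd_beats n t E k j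
      then (THE k. k \<in> agents n \<and> (\<forall>j \<in> agents n - {k}. avd_beats n t E k j))
      else t)"

text \<open>A priori popularity model: edge (i,j) present independently with probability p j.
Probability of the profile E (a subset of all_edges n).\<close>
definition profile_prob :: "nat \<Rightarrow> (nat \<Rightarrow> real) \<Rightarrow> (nat \<times> nat) set \<Rightarrow> real" where
  "profile_prob n p E = (\<Prod>e \<in> all_edges n. if e \<in> E then p (snd e) else 1 - p (snd e))"

definition avd_expected_gap :: "nat \<Rightarrow> (nat \<Rightarrow> real) \<Rightarrow> nat \<Rightarrow> real" where
  "avd_expected_gap n p t =
     (\<Sum>E \<in> Pow (all_edges n). profile_prob n p E *
        (real (max_indeg n E) - real (indeg n (avd_winner n t E) E)))"

end

theory Submission
  imports Defs "HOL-Library.FuncSet"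
begin

lemma exp_quad_le:
  fixes x :: real assumes "x \<le> 1" shows "exp x \<le> 1 + x + x^2"
proof (cases "x \<ge> 0")
  case True then show ?thesis using exp_bound[of x] assms by (simp add: power2_eq_square)
next
  case False
  define y where "y = -x"
  have y: "y > 0" using False y_def by simp
  have "exp x = 1 / exp y" using y_def by (simp add: exp_minus field_simps)
  also have "\<dots> \<le> 1 / (1 + y)" using y by (intro divide_left_mono) (auto simp: add_pos_pos)
  also have "\<dots> \<le> 1 - y + y^2"
  proof -
    have "1 \<le> (1 + y) * (1 - y + y^2)" using y by (simp add: algebra_simps power2_eq_square power3_eq_cube)
    then show ?thesis using y by (simp add: field_simps)
  qed
  finally show ?thesis using y_def by simp
qed

lemma bern_mgf:
  fixes q mu :: real
  assumes q: "0 \<le> q" "q \<le> 1" and mu: "\<bar>mu\<bar> \<le> 1"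
  shows "(1 - q + q * exp mu) * exp (- mu * q) \<le> 1 + mu^2 * q * (1 - q)"
proof -
  have e1: "exp (- mu * q) \<le> 1 + (- mu * q) + (- mu * q)^2"
    apply (rule exp_quad_le)
    using q mu by (smt (verit, best) mult_le_one mult_minus_left abs_le_iff mult_left_le)
  have e2: "exp (mu * (1 - q)) \<le> 1 + (mu * (1 - q)) + (mu * (1 - q))^2"
    apply (rule exp_quad_le)
    using q mu by (smt (verit, best) mult_le_one abs_le_iff mult_left_le mult_nonneg_nonneg)
  have "(1 - q + q * exp mu) * exp (- mu * q) = (1 - q) * exp (- mu * q) + q * exp (mu * (1 - q))"
    by (simp add: algebra_simps exp_add[symmetric] exp_diff)
  also have "\<dots> \<le> (1 - q) * (1 + (- mu * q) + (- mu * q)^2) + q * (1 + (mu * (1 - q)) + (mu * (1 - q))^2)"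
    using q e1 e2 by (intro add_mono mult_left_mono) auto
  also have "\<dots> = 1 + mu^2 * q * (1 - q)"
    by (simp add: algebra_simps power2_eq_square)
  finally show ?thesis .
qed

definition bpmf :: "nat \<Rightarrow> real \<Rightarrow> nat \<Rightarrow> real" where
  "bpmf n q x = real (n choose x) * q ^ x * (1 - q) ^ (n - x)"

lemma bpmf_nonneg: "0 \<le> q \<Longrightarrow> q \<le> 1 \<Longrightarrow> 0 \<le> bpmf n q x"
  by (simp add: bpmf_def)

lemma bpmf_zero: "x > n \<Longrightarrow> bpmf n q x = 0"
  by (simp add: bpmf_def)

lemma bpmf_mgf:
  "(\<Sum>x\<le>n. bpmf n q x * exp (mu * real x)) = (1 - q + q * exp mu) ^ n"
proof -
  have "(1 - q + q * exp mu) ^ n = (q * exp mu + (1 - q)) ^ n" by (simp add: algebra_simps)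
  also have "\<dots> = (\<Sum>k\<le>n. real (n choose k) * (q * exp mu) ^ k * (1 - q) ^ (n - k))"
    by (rule binomial_ring)
  also have "\<dots> = (\<Sum>x\<le>n. bpmf n q x * exp (mu * real x))"
    by (intro sum.cong) (auto simp: bpmf_def power_mult_distrib exp_of_nat_mult[symmetric] algebra_simps)
  finally show ?thesis by simp
qed

lemma bpmf_sum1: "(\<Sum>x\<le>n. bpmf n q x) = 1"
  using bpmf_mgf[of n q 0] by simp

lemma bpmf_mgf_centered:
  assumes q: "0 \<le> q" "q \<le> 1" and mu: "\<bar>mu\<bar> \<le> 1"
  shows "(\<Sum>x\<le>n. bpmf n q x * exp (mu * (real x - n * q))) \<le> exp (mu^2 * (n * q * (1 - q)))"
proof -
  have "(\<Sum>x\<le>n. bpmf n q x * exp (mu * (real x - n * q)))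
      = (\<Sum>x\<le>n. bpmf n q x * exp (mu * real x)) * exp (- mu * q) ^ n"
  proof -
    have "\<And>x. exp (mu * (real x - n * q)) = exp (mu * real x) * exp (- mu * q) ^ n"
      by (simp add: exp_of_nat_mult[symmetric] exp_add[symmetric] algebra_simps)
    then show ?thesis by (simp add: sum_distrib_right mult.assoc)
  qed
  also have "\<dots> = ((1 - q + q * exp mu) * exp (- mu * q)) ^ n"
    by (simp add: bpmf_mgf power_mult_distrib)
  also have "\<dots> \<le> (1 + mu^2 * q * (1 - q)) ^ n"
    apply (rule power_mono[OF bern_mgf[OF q mu]])
    using q by (intro mult_nonneg_nonneg) (auto intro: add_nonneg_nonneg)
  also have "\<dots> \<le> exp (mu^2 * q * (1 - q)) ^ n"
    apply (rule power_mono) using q by (auto intro: add_nonneg_nonneg)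
  also have "\<dots> = exp (mu^2 * (n * q * (1 - q)))"
    by (simp add: exp_of_nat_mult[symmetric] algebra_simps)
  finally show ?thesis .
qed


lemma lam_bound:
  fixes s sd a :: real
  assumes s: "s > 0" and sd: "sd \<ge> 0" and a: "a \<ge> 2*s*sd + 2*s^2"
  shows "(s / (sd+s) )^2 * sd^2 - (s / (sd+s)) * a \<le> -(s^2)"
proof -
  define l where "l = s / (sd+s)"
  have l0: "l \<ge> 0" using s sd by (simp add: l_def)
  have h1: "l * sd \<le> s" using s sd by (simp add: l_def field_simps)
  have h2: "l * (2*s*sd + 2*s^2) = 2 * s^2" using s sd by (simp add: l_def field_simps power2_eq_square)
  have "l^2 * sd^2 = (l*sd)^2" by (simp add: power_mult_distrib)
  also have "\<dots> \<le> s^2" using h1 l0 sd by (intro power_mono) auto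
  finally have "l^2 * sd^2 \<le> s^2" .
  moreover have "l * a \<ge> 2*s^2" using h2 a l0 by (metis mult_left_mono)
  ultimately show ?thesis unfolding l_def[symmetric] by linarith
qed

lemma bpmf_tail_gen:
  assumes q: "0 \<le> q" "q \<le> 1" and s: "s \<ge> 0" and sd: "sd \<ge> 0" "sd^2 = n*q*(1-q)"
    and a: "a \<ge> 2*s*sd + 2*s^2" and sgn: "sc = 1 \<or> sc = (-1::real)"
  shows "(\<Sum>x\<le>n. bpmf n q x * (if sc * (real x - n*q) \<ge> a then 1 else 0)) \<le> exp (-(s^2))"
proof (cases "s = 0")
  case True
  have "(\<Sum>x\<le>n. bpmf n q x * (if sc * (real x - n*q) \<ge> a then 1 else 0)) \<le> (\<Sum>x\<le>n. bpmf n q x)"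
    by (intro sum_mono) (auto simp: bpmf_nonneg q)
  then show ?thesis using True bpmf_sum1[of n q] by simp
next
  case False
  then have s0: "s > 0" using s by simp
  define l where "l = s / (sd+s)"
  have l0: "0 \<le> l" "l \<le> 1" using s0 sd by (auto simp: l_def field_simps)
  define mu where "mu = sc * l"
  have mu: "\<bar>mu\<bar> \<le> 1" using sgn l0 by (auto simp: mu_def)
  have "(\<Sum>x\<le>n. bpmf n q x * (if sc * (real x - n*q) \<ge> a then 1 else 0))
      \<le> (\<Sum>x\<le>n. bpmf n q x * (exp (mu * (real x - n*q)) * exp (- l * a)))"
  proof (intro sum_mono mult_left_mono)
    fix x assume "x \<in> {..n}"
    have "mu * (real x - n*q) = l * (sc * (real x - n*q))" by (simp add: mu_def)
    then have "exp (mu * (real x - n*q)) * exp (- l * a) = exp (l * (sc * (real x - n*q) - a))"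
      by (simp add: exp_add[symmetric] algebra_simps)
    moreover have "sc * (real x - n*q) \<ge> a \<Longrightarrow> 1 \<le> exp (l * (sc * (real x - n*q) - a))"
      using l0 by simp
    ultimately show "(if sc * (real x - n*q) \<ge> a then 1 else 0) \<le> exp (mu * (real x - n*q)) * exp (- l * a)"
      by auto
  qed (auto simp: bpmf_nonneg q)
  also have "\<dots> = (\<Sum>x\<le>n. bpmf n q x * exp (mu * (real x - n*q))) * exp (- l * a)"
    by (simp add: sum_distrib_right mult.assoc)
  also have "\<dots> \<le> exp (mu^2 * (n * q * (1 - q))) * exp (- l * a)"
    by (intro mult_right_mono bpmf_mgf_centered q mu) auto
  also have "\<dots> = exp (l^2 * sd^2 - l * a)"
  proof -
    have "mu^2 = l^2" using sgn by (auto simp: mu_def power_mult_distrib)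
    then show ?thesis by (simp only: sd(2) exp_diff exp_minus divide_inverse mult_minus_left)
  qed
  also have "\<dots> \<le> exp (-(s^2))"
    using lam_bound[OF s0 sd(1) a] by (simp add: l_def)
  finally show ?thesis .
qed


lemma sum_PiE_split:
  fixes w :: "'a \<Rightarrow> 'b \<Rightarrow> real"
  assumes I: "finite I" and j: "j \<in> I"
  shows "(\<Sum>d\<in>PiE I B. (\<Prod>i\<in>I. w i (d i)) * f d)
       = (\<Sum>d\<in>PiE (I-{j}) B. (\<Prod>i\<in>I-{j}. w i (d i)) * (\<Sum>x\<in>B j. w j x * f (d(j:=x))))"
proof -
  have Ieq: "I = insert j (I - {j})" using j by auto
  have upd: "\<And>(a::'a\<Rightarrow>'b) i. (if i = j then a j else (a(j := undefined)) i) = a i" by auto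
  have "(\<Sum>d\<in>PiE I B. (\<Prod>i\<in>I. w i (d i)) * f d)
      = (\<Sum>(x,g)\<in>B j \<times> PiE (I-{j}) B. (\<Prod>i\<in>I. w i ((g(j:=x)) i)) * f (g(j:=x)))"
    by (rule sum.reindex_bij_witness[of _ "\<lambda>(x,g). g(j := x)" "\<lambda>d. (d j, d(j := undefined))"])
       (use j in \<open>auto simp: PiE_def extensional_def Pi_def upd\<close>)
  also have "\<dots> = (\<Sum>(x,g)\<in>B j \<times> PiE (I-{j}) B. (w j x * (\<Prod>i\<in>I-{j}. w i (g i))) * f (g(j:=x)))"
  proof (intro sum.cong refl, clarify)
    fix x g
    have "(\<Prod>i\<in>I. w i ((g(j:=x)) i)) = w j x * (\<Prod>i\<in>I-{j}. w i ((g(j:=x)) i))"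
      using I j by (simp add: prod.remove)
    also have "(\<Prod>i\<in>I-{j}. w i ((g(j:=x)) i)) = (\<Prod>i\<in>I-{j}. w i (g i))"
      by (intro prod.cong) auto
    finally show "(\<Prod>i\<in>I. w i ((g(j:=x)) i)) * f (g(j:=x)) = (w j x * (\<Prod>i\<in>I-{j}. w i (g i))) * f (g(j:=x))" by simp
  qed
  also have "\<dots> = (\<Sum>x\<in>B j. \<Sum>g\<in>PiE (I-{j}) B. (w j x * (\<Prod>i\<in>I-{j}. w i (g i))) * f (g(j:=x)))"
    by (rule sum.cartesian_product[symmetric])
  also have "\<dots> = (\<Sum>g\<in>PiE (I-{j}) B. \<Sum>x\<in>B j. (w j x * (\<Prod>i\<in>I-{j}. w i (g i))) * f (g(j:=x)))"
    by (rule sum.swap)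
  also have "\<dots> = (\<Sum>d\<in>PiE (I-{j}) B. (\<Prod>i\<in>I-{j}. w i (d i)) * (\<Sum>x\<in>B j. w j x * f (d(j:=x))))"
    by (simp add: sum_distrib_left mult_ac)
  finally show ?thesis .
qed

definition DV :: "nat \<Rightarrow> (nat \<Rightarrow> nat) set" where
  "DV n = PiE {..n} (\<lambda>_. {..n})"

definition pw :: "nat \<Rightarrow> (nat \<Rightarrow> real) \<Rightarrow> (nat \<Rightarrow> nat) \<Rightarrow> real" where
  "pw n p d = (\<Prod>j\<le>n. bpmf n (p j) (d j))"

definition EE :: "nat \<Rightarrow> (nat \<Rightarrow> real) \<Rightarrow> ((nat \<Rightarrow> nat) \<Rightarrow> real) \<Rightarrow> real" where
  "EE n p f = (\<Sum>d\<in>DV n. pw n p d * f d)"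

definition validp :: "nat \<Rightarrow> (nat \<Rightarrow> real) \<Rightarrow> bool" where
  "validp n p = (\<forall>j\<le>n. 0 \<le> p j \<and> p j \<le> 1)"

lemma finite_DV[simp]: "finite (DV n)"
  by (simp add: DV_def finite_PiE)

lemma pw_nonneg: "validp n p \<Longrightarrow> 0 \<le> pw n p d"
  unfolding pw_def validp_def by (intro prod_nonneg) (auto intro: bpmf_nonneg)

lemma Ex_mono:
  assumes "validp n p" "\<And>d. d \<in> DV n \<Longrightarrow> f d \<le> g d"
  shows "EE n p f \<le> EE n p g"
  unfolding EE_def using assms by (intro sum_mono mult_left_mono) (auto intro: pw_nonneg)

lemma Ex_add: "EE n p (\<lambda>d. f d + g d) = EE n p f + EE n p g"
  unfolding EE_def by (simp add: algebra_simps sum.distrib)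

lemma Ex_cmult: "EE n p (\<lambda>d. c * f d) = c * EE n p f"
  unfolding EE_def by (simp add: sum_distrib_left mult_ac)

lemma sum_pw_sub:
  assumes "J \<subseteq> {..n}"
  shows "(\<Sum>d\<in>PiE J (\<lambda>_. {..n}). \<Prod>i\<in>J. bpmf n (p i) (d i)) = 1"
proof -
  have fJ: "finite J" using assms finite_subset by blast
  have "(\<Sum>d\<in>PiE J (\<lambda>_. {..n}). \<Prod>i\<in>J. bpmf n (p i) (d i)) = (\<Prod>i\<in>J. \<Sum>x\<le>n. bpmf n (p i) x)"
    by (rule prod_sum_PiE[symmetric]) (use fJ in auto)
  also have "\<dots> = 1" by (simp add: bpmf_sum1)
  finally show ?thesis .
qed

lemma Ex_const: "EE n p (\<lambda>_. c) = c"
proof -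
  have "EE n p (\<lambda>_. c) = c * (\<Sum>d\<in>DV n. pw n p d)"
    unfolding EE_def by (simp add: sum_distrib_left mult_ac sum_distrib_right)
  also have "(\<Sum>d\<in>DV n. pw n p d) = 1"
    unfolding DV_def pw_def atMost_def[symmetric] by (rule sum_pw_sub) auto
  finally show ?thesis by simp
qed

lemma Ex_split:
  assumes j: "j \<le> n"
  shows "EE n p f = (\<Sum>d\<in>PiE ({..n}-{j}) (\<lambda>_. {..n}). (\<Prod>i\<in>{..n}-{j}. bpmf n (p i) (d i)) *
                       (\<Sum>x\<le>n. bpmf n (p j) x * f (d(j:=x))))"
  unfolding EE_def DV_def pw_def
  by (rule sum_PiE_split[where w = "\<lambda>i x. bpmf n (p i) x" and B = "\<lambda>_. {..n}", simplified]) (use j in auto)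

lemma Ex_marginal:
  assumes j: "j \<le> n"
  shows "EE n p (\<lambda>d. g (d j)) = (\<Sum>x\<le>n. bpmf n (p j) x * g x)"
proof -
  have "EE n p (\<lambda>d. g (d j)) = (\<Sum>d\<in>PiE ({..n}-{j}) (\<lambda>_. {..n}). (\<Prod>i\<in>{..n}-{j}. bpmf n (p i) (d i)) *
                       (\<Sum>x\<le>n. bpmf n (p j) x * g x))"
    using Ex_split[OF j, of p "\<lambda>d. g (d j)"] by simp
  also have "\<dots> = (\<Sum>d\<in>PiE ({..n}-{j}) (\<lambda>_. {..n}). (\<Prod>i\<in>{..n}-{j}. bpmf n (p i) (d i))) *
                       (\<Sum>x\<le>n. bpmf n (p j) x * g x)"
    by (simp add: sum_distrib_right)
  also have "(\<Sum>d\<in>PiE ({..n}-{j}) (\<lambda>_. {..n}). (\<Prod>i\<in>{..n}-{j}. bpmf n (p i) (d i))) = 1"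
    by (rule sum_pw_sub) auto
  finally show ?thesis by simp
qed


definition inA :: "nat \<Rightarrow> nat \<Rightarrow> (nat \<times> nat) set" where
  "inA n j = (\<lambda>i. (i, j)) ` ({..n} - {j})"

definition wA :: "nat \<Rightarrow> (nat \<Rightarrow> real) \<Rightarrow> nat \<Rightarrow> (nat \<times> nat) set \<Rightarrow> real" where
  "wA n p j S = (\<Prod>e\<in>inA n j. if e \<in> S then p j else 1 - p j)"

lemma finite_inA[simp]: "finite (inA n j)"
  by (simp add: inA_def)

lemma card_inA: "j \<le> n \<Longrightarrow> card (inA n j) = n"
proof -
  assume j: "j \<le> n"
  have "card (inA n j) = card ({..n} - {j})"
    unfolding inA_def by (rule card_image) (auto simp: inj_on_def)
  also have "\<dots> = n" using j by simp
  finally show ?thesis .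
qed

lemma all_edges_UN: "all_edges n = (\<Union>j\<le>n. inA n j)"
  by (auto simp: all_edges_def inA_def)

lemma inA_disj: "j \<noteq> k \<Longrightarrow> inA n j \<inter> inA n k = {}"
  by (auto simp: inA_def)

lemma profile_prob_factor:
  "profile_prob n p E = (\<Prod>j\<le>n. wA n p j (E \<inter> inA n j))"
proof -
  have "profile_prob n p E = (\<Prod>j\<le>n. \<Prod>e\<in>inA n j. if e \<in> E then p (snd e) else 1 - p (snd e))"
    unfolding profile_prob_def all_edges_UN
    by (rule prod.UNION_disjoint) (auto simp: inA_def)
  also have "\<dots> = (\<Prod>j\<le>n. wA n p j (E \<inter> inA n j))"
    unfolding wA_def by (intro prod.cong refl) (auto simp: inA_def)
  finally show ?thesis .
qed

lemma indeg_card: "indeg n j E = card (E \<inter> inA n j)"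
proof -
  have "E \<inter> inA n j = (\<lambda>i. (i, j)) ` {i \<in> agents n - {j}. (i, j) \<in> E}"
    by (auto simp: inA_def agents_def)
  then have "card (E \<inter> inA n j) = card {i \<in> agents n - {j}. (i, j) \<in> E}"
    by (simp add: card_image inj_on_def)
  then show ?thesis by (simp add: indeg_def indeg_in_def)
qed

lemma wA_card:
  assumes "S \<subseteq> inA n j" "j \<le> n"
  shows "wA n p j S = p j ^ card S * (1 - p j) ^ (n - card S)"
proof -
  have "wA n p j S = (\<Prod>e\<in>inA n j \<inter> {e. e \<in> S}. p j) * (\<Prod>e\<in>inA n j \<inter> - {e. e \<in> S}. 1 - p j)"
    unfolding wA_def by (rule prod.If_cases) simp
  moreover have "inA n j \<inter> {e. e \<in> S} = S" using assms by auto
  moreover have "inA n j \<inter> - {e. e \<in> S} = inA n j - S" by auto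
  moreover have "card (inA n j - S) = n - card S"
    using assms by (simp add: card_Diff_subset card_inA finite_subset)
  ultimately show ?thesis by simp
qed

lemma sum_wA:
  assumes j: "j \<le> n"
  shows "(\<Sum>S\<in>{S. S \<subseteq> inA n j \<and> card S = k}. wA n p j S) = bpmf n (p j) k"
proof -
  have "(\<Sum>S\<in>{S. S \<subseteq> inA n j \<and> card S = k}. wA n p j S)
      = (\<Sum>S\<in>{S. S \<subseteq> inA n j \<and> card S = k}. p j ^ k * (1 - p j) ^ (n - k))"
    by (intro sum.cong refl) (auto simp: wA_card j)
  also have "\<dots> = real (card {S. S \<subseteq> inA n j \<and> card S = k}) * (p j ^ k * (1 - p j) ^ (n - k))"
    by simp
  also have "card {S. S \<subseteq> inA n j \<and> card S = k} = n choose k"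
    using n_subsets[of "inA n j" k] by (simp add: card_inA j)
  finally show ?thesis by (simp add: bpmf_def mult_ac)
qed

lemma factorization:
  "(\<Sum>E\<in>Pow (all_edges n). profile_prob n p E * h (restrict (\<lambda>j. indeg n j E) {..n})) = EE n p h"
proof -
  let ?P = "PiE {..n} (\<lambda>j. Pow (inA n j))"
  have step1: "(\<Sum>F\<in>?P. (\<Prod>j\<le>n. wA n p j (F j)) * h (restrict (\<lambda>j. card (F j)) {..n}))
      = (\<Sum>E\<in>Pow (all_edges n). profile_prob n p E * h (restrict (\<lambda>j. indeg n j E) {..n}))"
  proof (rule sum.reindex_bij_witness[where i = "\<lambda>E. restrict (\<lambda>j. E \<inter> inA n j) {..n}"
                                       and j = "\<lambda>F. \<Union>j\<le>n. F j"])
    fix F assume F: "F \<in> ?P"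
    have key: "\<And>k. k \<le> n \<Longrightarrow> (\<Union>j\<le>n. F j) \<inter> inA n k = F k"
    proof -
      fix k assume k: "k \<le> n"
      have "(\<Union>j\<le>n. F j) \<inter> inA n k = (\<Union>j\<le>n. F j \<inter> inA n k)" by blast
      also have "\<dots> = F k"
      proof
        show "(\<Union>j\<le>n. F j \<inter> inA n k) \<subseteq> F k"
        proof clarify
          fix e j assume "j \<le> n" "e \<in> F j" "e \<in> inA n k"
          moreover have "F j \<subseteq> inA n j" using F \<open>j \<le> n\<close> by auto
          ultimately show "e \<in> F k" using inA_disj[of j k n] by (cases "j = k") auto
        qed
        show "F k \<subseteq> (\<Union>j\<le>n. F j \<inter> inA n k)" using F k by auto
      qed
      finally show "(\<Union>j\<le>n. F j) \<inter> inA n k = F k" .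
    qed
    show "restrict (\<lambda>j. (\<Union>j\<le>n. F j) \<inter> inA n j) {..n} = F"
      using F key by (auto simp: PiE_def extensional_def restrict_def fun_eq_iff)
    show "(\<Union>j\<le>n. F j) \<in> Pow (all_edges n)"
      using F by (auto simp: all_edges_UN)
    show "profile_prob n p (\<Union>j\<le>n. F j) * h (restrict (\<lambda>j. indeg n j (\<Union>j\<le>n. F j)) {..n})
        = (\<Prod>j\<le>n. wA n p j (F j)) * h (restrict (\<lambda>j. card (F j)) {..n})"
    proof -
      have "profile_prob n p (\<Union>j\<le>n. F j) = (\<Prod>j\<le>n. wA n p j (F j))"
        unfolding profile_prob_factor by (intro prod.cong) (auto simp: key)
      moreover have "restrict (\<lambda>j. indeg n j (\<Union>j\<le>n. F j)) {..n} = restrict (\<lambda>j. card (F j)) {..n}"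
        by (auto simp: restrict_def indeg_card key)
      ultimately show ?thesis by simp
    qed
  next
    fix E assume E: "E \<in> Pow (all_edges n)"
    show "(\<Union>j\<le>n. restrict (\<lambda>j. E \<inter> inA n j) {..n} j) = E"
      using E by (auto simp: all_edges_UN)
    show "restrict (\<lambda>j. E \<inter> inA n j) {..n} \<in> ?P" by auto
  qed
  have step2: "(\<Sum>F\<in>?P. (\<Prod>j\<le>n. wA n p j (F j)) * h (restrict (\<lambda>j. card (F j)) {..n}))
     = (\<Sum>d\<in>DV n. \<Sum>F\<in>{F. F \<in> ?P \<and> restrict (\<lambda>j. card (F j)) {..n} = d}.
           (\<Prod>j\<le>n. wA n p j (F j)) * h (restrict (\<lambda>j. card (F j)) {..n}))"
  proof (rule sum.group[symmetric])
    show "finite ?P" by (auto intro!: finite_PiE)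
    show "finite (DV n)" by simp
    show "(\<lambda>F. restrict (\<lambda>j. card (F j)) {..n}) ` ?P \<subseteq> DV n"
    proof clarify
      fix F assume F: "F \<in> ?P"
      have "\<And>j. j \<le> n \<Longrightarrow> card (F j) \<le> n"
      proof -
        fix j assume j: "j \<le> n"
        have "F j \<subseteq> inA n j" using F j by auto
        then have "card (F j) \<le> card (inA n j)" by (intro card_mono) auto
        then show "card (F j) \<le> n" using card_inA[OF j] by simp
      qed
      then show "restrict (\<lambda>j. card (F j)) {..n} \<in> DV n" by (auto simp: DV_def)
    qed
  qed
  have step3: "\<And>d. d \<in> DV n \<Longrightarrow>
       (\<Sum>F\<in>{F. F \<in> ?P \<and> restrict (\<lambda>j. card (F j)) {..n} = d}.
           (\<Prod>j\<le>n. wA n p j (F j)) * h (restrict (\<lambda>j. card (F j)) {..n})) = pw n p d * h d"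
  proof -
    fix d assume d: "d \<in> DV n"
    have set_eq: "{F. F \<in> ?P \<and> restrict (\<lambda>j. card (F j)) {..n} = d}
        = PiE {..n} (\<lambda>j. {S. S \<subseteq> inA n j \<and> card S = d j})"
    proof (intro set_eqI iffI)
      fix F assume "F \<in> {F. F \<in> ?P \<and> restrict (\<lambda>j. card (F j)) {..n} = d}"
      then have F: "F \<in> ?P" and dd: "restrict (\<lambda>j. card (F j)) {..n} = d" by auto
      have "\<And>j. j \<le> n \<Longrightarrow> card (F j) = d j" using dd by (metis atMost_iff restrict_apply)
      then show "F \<in> PiE {..n} (\<lambda>j. {S. S \<subseteq> inA n j \<and> card S = d j})" using F by auto
    next
      fix F assume F: "F \<in> PiE {..n} (\<lambda>j. {S. S \<subseteq> inA n j \<and> card S = d j})"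
      have "restrict (\<lambda>j. card (F j)) {..n} = d"
        using F d by (auto simp: DV_def PiE_def extensional_def restrict_def fun_eq_iff)
      then show "F \<in> {F. F \<in> ?P \<and> restrict (\<lambda>j. card (F j)) {..n} = d}" using F by auto
    qed
    have "(\<Sum>F\<in>{F. F \<in> ?P \<and> restrict (\<lambda>j. card (F j)) {..n} = d}.
           (\<Prod>j\<le>n. wA n p j (F j)) * h (restrict (\<lambda>j. card (F j)) {..n}))
        = (\<Sum>F\<in>PiE {..n} (\<lambda>j. {S. S \<subseteq> inA n j \<and> card S = d j}). (\<Prod>j\<le>n. wA n p j (F j))) * h d"
      unfolding set_eq sum_distrib_right
    proof (intro sum.cong refl)
      fix F assume F: "F \<in> PiE {..n} (\<lambda>j. {S. S \<subseteq> inA n j \<and> card S = d j})"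
      have "restrict (\<lambda>j. card (F j)) {..n} = d"
        using F d by (auto simp: DV_def PiE_def extensional_def restrict_def fun_eq_iff)
      then show "(\<Prod>j\<le>n. wA n p j (F j)) * h (restrict (\<lambda>j. card (F j)) {..n}) = (\<Prod>j\<le>n. wA n p j (F j)) * h d"
        by simp
    qed
    also have "(\<Sum>F\<in>PiE {..n} (\<lambda>j. {S. S \<subseteq> inA n j \<and> card S = d j}). (\<Prod>j\<le>n. wA n p j (F j)))
        = (\<Prod>j\<le>n. \<Sum>S\<in>{S. S \<subseteq> inA n j \<and> card S = d j}. wA n p j S)"
      by (rule prod_sum_PiE[symmetric]) auto
    also have "\<dots> = pw n p d"
      unfolding pw_def by (intro prod.cong refl) (simp add: sum_wA)
    finally show "(\<Sum>F\<in>{F. F \<in> ?P \<and> restrict (\<lambda>j. card (F j)) {..n} = d}.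
           (\<Prod>j\<le>n. wA n p j (F j)) * h (restrict (\<lambda>j. card (F j)) {..n})) = pw n p d * h d" .
  qed
  show ?thesis
    unfolding step1[symmetric] step2 EE_def by (intro sum.cong refl step3)
qed


definition MX :: "nat \<Rightarrow> nat \<Rightarrow> (nat \<Rightarrow> nat) \<Rightarrow> nat" where
  "MX n t d = Max (d ` ({..n} - {t}))"

definition Wf :: "nat \<Rightarrow> nat \<Rightarrow> (nat \<Rightarrow> nat) \<Rightarrow> real" where
  "Wf n t d = real (max (MX n t d) (d t)) - real (d t)"

definition Bev :: "nat \<Rightarrow> nat \<Rightarrow> (nat \<Rightarrow> nat) \<Rightarrow> bool" where
  "Bev n t d = (\<exists>j k. j \<le> n \<and> k \<le> n \<and> j \<noteq> t \<and> k \<noteq> t \<and> j \<noteq> k \<and> d k = MX n t d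
                 \<and> MX n t d \<le> d j + 2 \<and> d t + 3 \<le> MX n t d)"

definition Fb :: "nat \<Rightarrow> nat \<Rightarrow> (nat \<Rightarrow> nat) \<Rightarrow> real" where
  "Fb n t d = (if Bev n t d then Wf n t d else 0)"

lemma Wf_nonneg: "0 \<le> Wf n t d" by (simp add: Wf_def)
lemma Fb_nonneg: "0 \<le> Fb n t d" by (simp add: Fb_def Wf_nonneg)

lemma MX_cong: "t \<le> n \<Longrightarrow> (\<And>i. i \<le> n \<Longrightarrow> d i = d' i) \<Longrightarrow> MX n t d = MX n t d'"
  unfolding MX_def by (intro arg_cong[where f = Max] image_cong) auto

lemma Fb_cong: assumes "t \<le> n" "\<And>i. i \<le> n \<Longrightarrow> d i = d' i" shows "Fb n t d = Fb n t d'"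
proof -
  have m: "MX n t d = MX n t d'" using MX_cong[OF assms] .
  have dt: "d t = d' t" using assms by auto
  have "Bev n t d = Bev n t d'" unfolding Bev_def m dt using assms(2) by (auto; metis)
  then show ?thesis unfolding Fb_def Wf_def m dt by simp
qed

lemma indeg_in_le: "S \<subseteq> agents n - {k} \<Longrightarrow> indeg_in k S E \<le> indeg n k E"
  unfolding indeg_def indeg_in_def by (intro card_mono) (auto simp: agents_def)

lemma indeg_ge: assumes "S \<subseteq> agents n - {k}"
  shows "indeg n k E \<le> indeg_in k S E + card ((agents n - {k}) - S)"
proof -
  have "{i \<in> agents n - {k}. (i, k) \<in> E} \<subseteq> {i \<in> S. (i, k) \<in> E} \<union> ((agents n - {k}) - S)" using assms by auto
  then have "card {i \<in> agents n - {k}. (i, k) \<in> E} \<le> card ({i \<in> S. (i, k) \<in> E} \<union> ((agents n - {k}) - S))"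
    by (intro card_mono) (use assms in \<open>auto simp: agents_def intro: finite_subset\<close>)
  also have "\<dots> \<le> card {i \<in> S. (i, k) \<in> E} + card ((agents n - {k}) - S)" by (rule card_Un_le)
  finally show ?thesis unfolding indeg_def indeg_in_def .
qed

lemma indeg_ge2: "indeg n k E \<le> indeg_in k (agents n - {a, b, k}) E + 2"
proof -
  have "indeg n k E \<le> indeg_in k (agents n - {a, b, k}) E + card ((agents n - {k}) - (agents n - {a, b, k}))"
    by (rule indeg_ge) auto
  moreover have "card ((agents n - {k}) - (agents n - {a, b, k})) \<le> card {a, b}"
    by (intro card_mono) auto
  moreover have "card {a, b} \<le> 2" by (simp add: card_insert_if)
  ultimately show ?thesis by linarith
qed

lemma indeg_ge1: "indeg n k E \<le> indeg_in k (agents n - {k, a}) E + 1"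
proof -
  have "indeg n k E \<le> indeg_in k (agents n - {k, a}) E + card ((agents n - {k}) - (agents n - {k, a}))"
    by (rule indeg_ge) auto
  moreover have "card ((agents n - {k}) - (agents n - {k, a})) \<le> card {a}"
    by (intro card_mono) auto
  ultimately show ?thesis by simp
qed

lemma beats_antisym: "avd_beats n t E a b \<Longrightarrow> \<not> avd_beats n t E b a"
  unfolding avd_beats_def by (auto simp: insert_commute split: if_splits)


lemma max_indeg_eq:
  assumes "t \<le> n" "n \<ge> 1"
  shows "max_indeg n E = max (MX n t (\<lambda>j. indeg n j E)) (indeg n t E)"
proof -
  have ne: "{..n} - {t} \<noteq> {}" using assms by (metis Diff_eq_empty_iff atMost_iff le_SucE le_zero_eq nat_le_linear not_one_le_zero singleton_iff subset_eq insertCI one_neq_zero)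
  have ag: "agents n = insert t ({..n} - {t})" using assms by (auto simp: agents_def)
  have "max_indeg n E = Max (insert (indeg n t E) ((\<lambda>j. indeg n j E) ` ({..n} - {t})))"
    unfolding max_indeg_def ag by (simp only: image_insert)
  also have "\<dots> = max (indeg n t E) (Max ((\<lambda>j. indeg n j E) ` ({..n} - {t})))"
    by (rule Max_insert) (use ne in auto)
  finally show ?thesis by (simp add: MX_def max.commute)
qed

lemma beats_nn: "k \<noteq> t \<Longrightarrow> j \<noteq> t \<Longrightarrow>
   avd_beats n t E k j = (indeg_in k (agents n - {k, j, t}) E > indeg_in j (agents n - {k, j, t}) E)"
  by (simp add: avd_beats_def)
lemma beats_nt: "k \<noteq> t \<Longrightarrow>
   avd_beats n t E k t = (indeg_in k (agents n - {k, t}) E > indeg_in t (agents n - {k, t}) E)"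
  by (simp add: avd_beats_def)
lemma beats_tn: "j \<noteq> t \<Longrightarrow>
   avd_beats n t E t j = (indeg_in j (agents n - {j, t}) E < indeg_in t (agents n - {j, t}) E)"
  by (simp add: avd_beats_def)

lemma gap_bound:
  assumes t: "t \<le> n" and n1: "n \<ge> 1"
  shows "real (max_indeg n E) - real (indeg n (avd_winner n t E) E) \<le> 2 + Fb n t (\<lambda>j. indeg n j E)"
proof -
  define dg where "dg = (\<lambda>j. indeg n j E)"
  have ne: "{..n} - {t} \<noteq> {}" using t n1 by (metis Diff_eq_empty_iff atMost_iff le_SucE le_zero_eq nat_le_linear not_one_le_zero singleton_iff subset_eq insertCI one_neq_zero)
  have D: "max_indeg n E = max (MX n t dg) (dg t)" using max_indeg_eq[OF t n1] by (simp add: dg_def)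
  have MXge: "\<And>i. i \<le> n \<Longrightarrow> i \<noteq> t \<Longrightarrow> dg i \<le> MX n t dg" unfolding MX_def by (intro Max_ge) auto
  obtain k0 where k0: "k0 \<le> n" "k0 \<noteq> t" "dg k0 = MX n t dg"
  proof -
    have "MX n t dg \<in> dg ` ({..n} - {t})" unfolding MX_def using ne by (intro Max_in) auto
    then obtain x where "x \<in> {..n} - {t}" "MX n t dg = dg x" by blast
    then show ?thesis using that[of x] by simp
  qed
  have Dge: "\<And>i. i \<le> n \<Longrightarrow> dg i \<le> max_indeg n E" using MXge D by (metis le_max_iff_disj order_refl)
  obtain m where m: "m \<le> n" "dg m = max_indeg n E"
    using D k0 t by (metis max_def)
  show ?thesis
  proof (cases "\<exists>k\<in>agents n. \<forall>j\<in>agents n - {k}. avd_beats n t E k j")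
    case True
    then obtain k where k: "k \<in> agents n" "\<forall>j\<in>agents n - {k}. avd_beats n t E k j" by blast
    have w: "avd_winner n t E = k"
    proof -
      have "(THE k. k \<in> agents n \<and> (\<forall>j \<in> agents n - {k}. avd_beats n t E k j)) = k"
      proof (rule the_equality)
        show "k \<in> agents n \<and> (\<forall>j \<in> agents n - {k}. avd_beats n t E k j)" using k by blast
        fix k' assume k': "k' \<in> agents n \<and> (\<forall>j \<in> agents n - {k'}. avd_beats n t E k' j)"
        show "k' = k"
        proof (rule ccontr)
          assume "k' \<noteq> k"
          then have "avd_beats n t E k' k" "avd_beats n t E k k'" using k k' by auto
          then show False using beats_antisym by blast
        qed
      qed
      then show ?thesis unfolding avd_winner_def using True by simp
    qed
    have "dg m \<le> dg k + 2"
    proof (cases "m = k")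
      case False
      then have bk: "avd_beats n t E k m" using k m by (auto simp: agents_def)
      show ?thesis
      proof (cases "k = t")
        case True
        then have mt: "m \<noteq> t" using False by simp
        have "indeg_in m (agents n - {m, t}) E < indeg_in t (agents n - {m, t}) E"
          using bk beats_tn[OF mt] True by simp
        moreover have "dg m \<le> indeg_in m (agents n - {m, t}) E + 1" unfolding dg_def by (rule indeg_ge1)
        moreover have "indeg_in t (agents n - {m, t}) E \<le> dg t" unfolding dg_def by (rule indeg_in_le) auto
        ultimately show ?thesis using True by simp
      next
        case kt: False
        show ?thesis
        proof (cases "m = t")
          case True
          have "indeg_in k (agents n - {k, t}) E > indeg_in t (agents n - {k, t}) E"
            using bk beats_nt[OF kt] True by simp
          moreover have "dg t \<le> indeg_in t (agents n - {t, k}) E + 1" unfolding dg_def by (rule indeg_ge1)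
          moreover have "indeg_in k (agents n - {k, t}) E \<le> dg k" unfolding dg_def by (rule indeg_in_le) auto
          moreover have "agents n - {t, k} = agents n - {k, t}" by auto
          ultimately show ?thesis using True by simp
        next
          case mt: False
          have "indeg_in k (agents n - {k, m, t}) E > indeg_in m (agents n - {k, m, t}) E"
            using bk beats_nn[OF kt mt] by simp
          moreover have "dg m \<le> indeg_in m (agents n - {k, t, m}) E + 2" unfolding dg_def by (rule indeg_ge2)
          moreover have "indeg_in k (agents n - {k, m, t}) E \<le> dg k" unfolding dg_def by (rule indeg_in_le) auto
          moreover have "agents n - {k, t, m} = agents n - {k, m, t}" by auto
          ultimately show ?thesis by simp
        qed
      qed
    qed simp
    then have "real (max_indeg n E) - real (indeg n (avd_winner n t E) E) \<le> 2"
      using m w by (simp add: dg_def)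
    then show ?thesis using Fb_nonneg[of n t dg] by (simp add: dg_def)
  next
    case False
    then have w: "avd_winner n t E = t" unfolding avd_winner_def by (simp only: if_False)
    show ?thesis
    proof (cases "max_indeg n E \<le> dg t + 2")
      case True
      then show ?thesis using w Fb_nonneg[of n t dg] by (simp add: dg_def)
    next
      case big: False
      then have MXbig: "dg t + 3 \<le> MX n t dg" using D by auto
      have DMX: "max_indeg n E = MX n t dg" using D MXbig by simp
      have "k0 \<in> agents n" using k0 by (simp add: agents_def)
      then obtain j where j: "j \<in> agents n - {k0}" "\<not> avd_beats n t E k0 j" using False by blast
      show ?thesis
      proof (cases "j = t")
        case True
        have "\<not> indeg_in k0 (agents n - {k0, t}) E > indeg_in t (agents n - {k0, t}) E"
          using j beats_nt[OF k0(2)] True by simp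
        moreover have "dg k0 \<le> indeg_in k0 (agents n - {k0, t}) E + 1" unfolding dg_def by (rule indeg_ge1)
        moreover have "indeg_in t (agents n - {k0, t}) E \<le> dg t" unfolding dg_def by (rule indeg_in_le) auto
        ultimately show ?thesis using k0 MXbig by linarith
      next
        case jt: False
        have "\<not> indeg_in k0 (agents n - {k0, j, t}) E > indeg_in j (agents n - {k0, j, t}) E"
          using j beats_nn[OF k0(2) jt] by simp
        moreover have "dg k0 \<le> indeg_in k0 (agents n - {j, t, k0}) E + 2" unfolding dg_def by (rule indeg_ge2)
        moreover have "indeg_in j (agents n - {k0, j, t}) E \<le> dg j" unfolding dg_def by (rule indeg_in_le) auto
        moreover have "agents n - {j, t, k0} = agents n - {k0, j, t}" by auto
        ultimately have "dg k0 \<le> dg j + 2" by simp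
        then have "Bev n t dg" unfolding Bev_def using j jt k0 MXbig
          by (intro exI[of _ j] exI[of _ k0]) (auto simp: agents_def)
        then have "Fb n t dg = Wf n t dg" by (simp add: Fb_def)
        also have "\<dots> = real (max_indeg n E) - real (dg t)" unfolding Wf_def using D by simp
        finally show ?thesis using w by (simp add: dg_def)
      qed
    qed
  qed
qed


lemma bpmf_ratio:
  assumes y: "y < n"
  shows "bpmf n q (Suc y) * (real (Suc y) * (1-q)) = bpmf n q y * (real (n - y) * q)"
proof -
  have c: "real (n choose Suc y) * real (Suc y) = real (n choose y) * real (n - y)"
  proof -
    have "Suc y * (n choose Suc y) = n * ((n - 1) choose y)" by (rule binomial_absorption)
    also have "\<dots> = (n - y) * (n choose y)" by (rule binomial_absorb_comp[symmetric])
    finally show ?thesis by (metis of_nat_mult mult.commute)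
  qed
  have e: "n - y = Suc (n - Suc y)" using y by simp
  have "bpmf n q (Suc y) * (real (Suc y) * (1-q))
      = (real (n choose Suc y) * real (Suc y)) * q ^ y * q * (1-q) ^ (n - Suc y) * (1 - q)"
    by (simp add: bpmf_def mult_ac)
  also have "\<dots> = (real (n choose y) * real (n - y)) * q ^ y * q * (1-q) ^ (n - Suc y) * (1 - q)"
    by (simp only: c)
  also have "\<dots> = bpmf n q y * (real (n - y) * q)"
    by (simp add: bpmf_def e mult_ac)
  finally show ?thesis .
qed

lemma good_from_ratio:
  fixes q eps :: real and m :: nat
  assumes q: "0 < q" "q < 1" and eps: "0 < eps" "eps * m \<le> 1/2"
    and R: "\<And>y::nat. x \<le> y \<Longrightarrow> y < x + m \<Longrightarrow> (real n - real y) * q \<ge> (1 - eps) * (real y + 1) * (1 - q)"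
  shows "\<And>h. h \<le> m \<Longrightarrow> bpmf n q (x + h) \<ge> bpmf n q x / 2"
proof -
  have step: "bpmf n q (Suc y) \<ge> (1 - eps) * bpmf n q y" if y: "x \<le> y" "y < x + m" for y
  proof -
    have Ry: "(real n - real y) * q \<ge> (1 - eps) * (real y + 1) * (1 - q)" using R y by blast
    have epsl: "eps \<le> 1/2"
    proof -
      have "m \<ge> 1" using y by simp
      then have "eps * 1 \<le> eps * m" using eps by (intro mult_left_mono) auto
      then show ?thesis using eps(2) by linarith
    qed
    have pos: "(1 - eps) * (real y + 1) * (1 - q) > 0" using epsl q by (intro mult_pos_pos) auto
    then have "(real n - real y) * q > 0" using Ry by linarith
    then have yn: "y < n" using q by (smt (verit, best) of_nat_less_iff mult_nonpos_nonneg)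
    have "bpmf n q (Suc y) * (real (Suc y) * (1-q)) = bpmf n q y * (real (n - y) * q)"
      by (rule bpmf_ratio[OF yn])
    also have "real (n - y) = real n - real y" using yn by simp
    also have "bpmf n q y * ((real n - real y) * q) \<ge> bpmf n q y * ((1 - eps) * (real y + 1) * (1 - q))"
      using Ry q by (intro mult_left_mono) (auto intro: bpmf_nonneg)
    finally have "bpmf n q (Suc y) * ((real y + 1) * (1-q)) \<ge> ((1 - eps) * bpmf n q y) * ((real y + 1) * (1 - q))"
      by (simp add: mult_ac add.commute)
    moreover have "(real y + 1) * (1-q) > 0" using q by simp
    ultimately show ?thesis by (simp add: mult_le_cancel_right)
  qed
  have main: "h \<le> m \<Longrightarrow> bpmf n q (x + h) \<ge> (1 - h * eps) * bpmf n q x" for h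
  proof (induction h)
    case 0 then show ?case by simp
  next
    case (Suc h)
    then have IH: "bpmf n q (x + h) \<ge> (1 - h * eps) * bpmf n q x" by simp
    have hm: "real h * eps \<le> 1/2"
    proof -
      have "real h * eps \<le> real m * eps" using Suc.prems eps by (intro mult_right_mono) auto
      then show ?thesis using eps(2) mult.commute[of eps "real m"] by linarith
    qed
    have epsle: "eps \<le> 1/2"
    proof -
      have "eps * 1 \<le> eps * m" using eps Suc.prems by (intro mult_left_mono) auto
      then show ?thesis using eps(2) by linarith
    qed
    have A1: "(1 - eps) * bpmf n q (x + h) \<le> bpmf n q (x + Suc h)"
      using step[of "x + h"] Suc.prems by simp
    have A2: "(1 - eps) * ((1 - h * eps) * bpmf n q x) \<le> (1 - eps) * bpmf n q (x + h)"
      using IH epsle hm by (intro mult_left_mono) (auto simp: mult.commute)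
    have A: "bpmf n q (x + Suc h) \<ge> (1 - eps) * (1 - h * eps) * bpmf n q x"
      using order_trans[OF A2 A1] by (simp add: mult.assoc)
    have "(1 - eps) * (1 - h * eps) \<ge> 1 - Suc h * eps"
      using eps by (simp add: algebra_simps)
    then have "(1 - eps) * (1 - h * eps) * bpmf n q x \<ge> (1 - Suc h * eps) * bpmf n q x"
      using q by (intro mult_right_mono bpmf_nonneg) auto
    then show ?case using A by linarith
  qed
  fix h assume h: "h \<le> m"
  have "real h * eps \<le> 1/2"
  proof -
    have "real h * eps \<le> real m * eps" using h eps by (intro mult_right_mono) auto
    then show ?thesis using eps(2) mult.commute[of eps "real m"] by linarith
  qed
  then have "(1 - h * eps) * bpmf n q x \<ge> bpmf n q x / 2"
  proof -
    have b0: "0 \<le> bpmf n q x" using q by (intro bpmf_nonneg) auto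
    have "(1/2) * bpmf n q x \<le> (1 - h * eps) * bpmf n q x"
      using b0 \<open>real h * eps \<le> 1/2\<close> by (intro mult_right_mono) auto
    then show ?thesis by simp
  qed
  then show "bpmf n q (x + h) \<ge> bpmf n q x / 2" using main[OF h] by linarith
qed


lemma var_cmp1:
  fixes p pj :: real assumes "0 \<le> pj" "pj \<le> p" "p \<le> 1"
  shows "pj * (1 - pj) \<le> 2 * (p * (1 - p)) + (p - pj)"
proof (cases "p \<le> 1/2")
  case True
  have "pj * (1 - pj) \<le> pj" using assms by (simp add: mult_left_le)
  also have "\<dots> \<le> p" using assms by simp
  also have "p \<le> 2 * (p * (1 - p))"
  proof -
    have "p * (2 * p) \<le> p * 1" using True assms by (intro mult_left_mono) auto
    then show ?thesis by (simp add: algebra_simps)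
  qed
  finally show ?thesis using assms by simp
next
  case False
  have "pj * (1 - pj) \<le> 1 * (1 - pj)" using assms by (intro mult_right_mono) auto
  then have "pj * (1 - pj) \<le> 1 - pj" by simp
  also have "\<dots> = (1 - p) + (p - pj)" by simp
  also have "1 - p \<le> 2 * (p * (1 - p))"
  proof -
    have "(1 - p) * 1 \<le> (1 - p) * (2 * p)" using False assms by (intro mult_left_mono) auto
    then show ?thesis by (simp add: algebra_simps)
  qed
  finally show ?thesis by simp
qed

lemma var_cmp2:
  fixes p pj :: real assumes "0 \<le> pj" "pj \<le> p" "p \<le> 1"
  shows "p * (1 - p) \<le> pj * (1 - pj) + (p - pj)"
proof -
  have "p * (1 - p) - pj * (1 - pj) = (p - pj) * (1 - p - pj)" by (simp add: algebra_simps)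
  also have "\<dots> \<le> (p - pj) * 1" using assms by (intro mult_left_mono) auto
  finally show ?thesis by simp
qed

lemma R1:
  fixes N p pj s sd sdj :: real
  assumes N: "N \<ge> 0" and pp: "0 \<le> pj" "pj \<le> p" "p \<le> 1" and s: "s \<ge> 0"
    and sd: "sd \<ge> 0" "sd^2 = N * (p * (1 - p))" and sdj: "sdj \<ge> 0" "sdj^2 = N * (pj * (1 - pj))"
  shows "N * pj + (2*s*sdj + 2*s^2) - (N * p - (2*s*sd + 2*s^2)) \<le> 5*s*sd + 5*s^2"
proof -
  define u where "u = N * (p - pj)"
  have u0: "u \<ge> 0" using N pp by (simp add: u_def)
  have b: "sdj^2 \<le> 2 * sd^2 + u"
  proof -
    have "N * (pj * (1 - pj)) \<le> N * (2 * (p * (1 - p)) + (p - pj))"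
      using var_cmp1[OF pp] N by (intro mult_left_mono) auto
    then show ?thesis using sd sdj by (simp add: u_def algebra_simps)
  qed
  have sq: "(2*s*sdj)^2 \<le> (3*s*sd + s^2 + u)^2"
  proof -
    have "(2*s*sdj)^2 = 4 * s^2 * sdj^2" by (simp add: power_mult_distrib)
    also have "\<dots> \<le> 4 * s^2 * (2 * sd^2 + u)" using b s by (intro mult_left_mono) auto
    also have "\<dots> \<le> 9 * s^2 * sd^2 + (s^2 + u)^2"
    proof -
      have "4 * s^2 * u \<le> (s^2 + u)^2" using sum_squares_ge_zero[of "s^2 - u" 0]
        by (simp add: power2_eq_square algebra_simps)
      moreover have "0 \<le> s^2 * sd^2" by simp
      moreover have "4 * s^2 * (2 * sd^2 + u) = 8 * (s^2 * sd^2) + 4 * s^2 * u" by (simp add: algebra_simps)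
      moreover have "9 * s^2 * sd^2 = 9 * (s^2 * sd^2)" by simp
      ultimately show ?thesis by linarith
    qed
    also have "\<dots> \<le> (3*s*sd + s^2 + u)^2"
    proof -
      have "0 \<le> 3*s*sd * (s^2 + u)" using s sd u0 by simp
      then show ?thesis by (simp add: power2_eq_square algebra_simps)
    qed
    finally show ?thesis .
  qed
  have "2*s*sdj \<le> 3*s*sd + s^2 + u"
    using power2_le_imp_le[OF sq] s sd u0 by simp
  then show ?thesis by (simp add: u_def algebra_simps)
qed


lemma R2:
  fixes N p pj s sd sdj x y m :: real
  assumes N: "N \<ge> 0" and pp: "0 \<le> pj" "pj \<le> p" "p \<le> 1" and s: "s \<ge> 1"
    and sd: "sd \<ge> 0" "sd^2 = N * (p * (1 - p))" and sdj: "sdj \<ge> 0" "sdj^2 = N * (pj * (1 - pj))"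
    and big: "sd \<ge> 240 * s" and m: "m \<ge> 1" "m \<le> sd / (30 * s)"
    and xu: "x < N * pj + (2*s*sdj + 2*s^2)" and xl: "x \<ge> N * p - (2*s*sd + 2*s^2)"
    and y: "x \<le> y" "y \<le> x + m - 1"
  shows "(N - y) * pj \<ge> (1 - 1/(2*m)) * (y + 1) * (1 - pj) \<and> sdj^2 > 0"
proof -
  define u where "u = N * (p - pj)"
  define dv where "dv = 2*s*sd + 2*s^2"
  define dvj where "dvj = 2*s*sdj + 2*s^2"
  have s0: "s > 0" using s by simp
  have sd0: "sd > 0" using big s by simp
  have ss: "s^2 \<le> s * sd / 240" using big s by (simp add: power2_eq_square field_simps)
  have ua: "u < dvj + dv" using xu xl by (simp add: u_def dv_def dvj_def algebra_simps)
  have b: "sdj^2 \<le> 2 * sd^2 + u"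
  proof -
    have "N * (pj * (1 - pj)) \<le> N * (2 * (p * (1 - p)) + (p - pj))"
      using var_cmp1[OF pp] N by (intro mult_left_mono) auto
    then show ?thesis using sd sdj by (simp add: u_def algebra_simps)
  qed
  have c: "sd^2 \<le> sdj^2 + u"
  proof -
    have "N * (p * (1 - p)) \<le> N * (pj * (1 - pj) + (p - pj))"
      using var_cmp2[OF pp] N by (intro mult_left_mono) auto
    then show ?thesis using sd sdj by (simp add: u_def algebra_simps)
  qed
  have d: "sdj \<le> 2 * sd"
  proof (rule ccontr)
    assume "\<not> sdj \<le> 2 * sd"
    then have gt: "sdj > 2 * sd" by simp
    have u1: "u < 2*s*sdj + 2*s*sd + 4*s^2" using ua by (simp add: dv_def dvj_def)
    have a1: "(240*s) * sdj \<le> sd * sdj" using big sdj by (intro mult_right_mono) auto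
    have a2: "(240*s) * sd \<le> sd * sd" using big sd by (intro mult_right_mono) auto
    have a3: "(240*s) * (240*s) \<le> sd * sd" using big s by (intro mult_mono) auto
    have a4: "(2*sd) * sdj \<le> sdj * sdj" using gt sdj by (intro mult_right_mono) auto
    have a5: "(2*sd) * (2*sd) \<le> sdj * sdj" using gt sd by (intro mult_mono) auto
    have a6: "sdj * sdj \<le> 2 * (sd * sd) + u" using b by (simp add: power2_eq_square)
    have a7: "0 < sdj * sdj" using gt sd by simp
    have a8: "s^2 = s * s" by (simp add: power2_eq_square)
    show False using u1 a1 a2 a3 a4 a5 a6 a7 a8 by (simp add: algebra_simps)
  qed
  have e: "dvj \<le> 5 * s * sd"
  proof -
    have "2*s*sdj \<le> 2*s*(2*sd)" using d s by (intro mult_left_mono) auto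
    moreover have "2*s*(2*sd) = 4*(s*sd)" "5 * s * sd = 5*(s*sd)" "s * sd / 240 = (s*sd)/240" "0 \<le> s*sd" using s sd by simp_all
    ultimately show ?thesis using ss s sd unfolding dvj_def by linarith
  qed
  have f: "dv \<le> 3 * s * sd"
  proof -
    have "0 \<le> s*sd" "3 * s * sd = 3*(s*sd)" "2*s*sd = 2*(s*sd)" using s sd by simp_all
    then show ?thesis using ss unfolding dv_def by linarith
  qed
  have pos: "sdj^2 > 0"
  proof -
    have "(240*s) * sd \<le> sd * sd" using big sd by (intro mult_right_mono) auto
    moreover have "0 < s * sd" "5 * s * sd = 5*(s*sd)" "3 * s * sd = 3*(s*sd)" "sd^2 = sd * sd" "240*s*sd = 240*(s*sd)"
      using s sd0 by (simp_all add: power2_eq_square)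
    ultimately show ?thesis using c ua e f by linarith
  qed
  have L: "(y + 1) * (1 - pj) \<ge> sd^2 - 11 * s * sd"
  proof -
    have "(y + 1) * (1 - pj) \<ge> x * (1 - pj)" using y pp by (intro mult_right_mono) auto
    moreover have "x * (1 - pj) \<ge> (N * p - dv) * (1 - pj)" using xl pp by (intro mult_right_mono) (auto simp: dv_def)
    moreover have "(N * p - dv) * (1 - pj) = (N * pj - dv) * (1 - pj) + u * (1 - pj)"
      by (simp add: u_def algebra_simps)
    moreover have "u * (1 - pj) \<ge> 0 \<or> True" by simp
    moreover have "(N * pj - dv) * (1 - pj) = sdj^2 - dv * (1 - pj)" using sdj by (simp add: algebra_simps)
    moreover have "dv * (1 - pj) \<le> dv"
    proof -
      have "0 \<le> dv" unfolding dv_def using s sd by simp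
      then show ?thesis by (intro mult_left_le) (use pp in auto)
    qed
    moreover have "u * (1 - pj) \<ge> 0" using N pp by (simp add: u_def)
    ultimately have "(y + 1) * (1 - pj) \<ge> sdj^2 - dv" by linarith
    moreover have "sdj^2 \<ge> sd^2 - u" using c by simp
    moreover have "5 * s * sd = 5*(s*sd)" "3 * s * sd = 3*(s*sd)" "11 * s * sd = 11*(s*sd)" by simp_all
    ultimately show ?thesis using ua e f by linarith
  qed
  have L2: "sd^2 - 11 * s * sd \<ge> (19/20) * sd^2"
  proof -
    have "11 * s * sd \<le> 11 * (sd / 240) * sd" using big sd s by (intro mult_right_mono) auto
    moreover have "0 \<le> s * sd" using s sd by simp
    ultimately show ?thesis by (simp add: power2_eq_square)
  qed
  have m2: "1 / (2*m) \<ge> 15 * s / sd"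
  proof -
    have "m * (30 * s) \<le> sd" using m s by (simp add: field_simps)
    then show ?thesis using m s sd0 by (simp add: field_simps)
  qed
  have eL: "(1/(2*m)) * ((y + 1) * (1 - pj)) \<ge> 14 * s * sd"
  proof -
    have "(1/(2*m)) * ((y + 1) * (1 - pj)) \<ge> (15 * s / sd) * ((19/20) * sd^2)"
    proof (rule mult_mono[OF m2])
      show "(19/20) * sd^2 \<le> (y + 1) * (1 - pj)" using L L2 by linarith
      show "0 \<le> 1/(2*m)" using m by simp
      show "0 \<le> (19/20) * sd^2" by simp
    qed
    moreover have "(15 * s / sd) * ((19/20) * sd^2) = (57/4) * (s * sd)" using sd0 by (simp add: power2_eq_square)
    moreover have "0 \<le> s * sd" "14 * s * sd = 14 * (s * sd)" using s sd0 by simp_all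
    ultimately show ?thesis by linarith
  qed
  have mle: "m \<le> s * sd"
  proof -
    have "m \<le> sd / (30 * s)" by (rule m(2))
    also have "\<dots> \<le> sd" using s sd0 by (simp add: field_simps)
    also have "\<dots> \<le> s * sd" using s sd0 by simp
    finally show ?thesis .
  qed
  have "(N - y) * pj - (1 - 1/(2*m)) * (y + 1) * (1 - pj) = N * pj - y - 1 + pj + (1/(2*m)) * ((y + 1) * (1 - pj))"
    using m by (simp add: field_simps)
  moreover have "N * pj - y - 1 + pj \<ge> - dvj - m" using y xu pp by (simp add: dvj_def)
  moreover have "14 * s * sd = 14 * (s * sd)" "5 * s * sd = 5 * (s * sd)" "0 \<le> s * sd" using s sd by simp_all
  ultimately show ?thesis using eL e mle pos by linarith
qed


definition ind :: "bool \<Rightarrow> real" where "ind P = (if P then 1 else 0)"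

lemma ind_nonneg[simp]: "0 \<le> ind P" by (simp add: ind_def)
lemma ind_le1[simp]: "ind P \<le> 1" by (simp add: ind_def)

lemma shift_core:
  fixes pi phi :: "nat \<Rightarrow> real" and m M n :: nat
  assumes m: "m \<ge> 3" and pi0: "\<And>y. 0 \<le> pi y" and phi0: "\<And>y. 0 \<le> phi y"
    and mono: "\<And>x y. x \<le> y \<Longrightarrow> phi x \<le> phi y" and piz: "\<And>y. y > n \<Longrightarrow> pi y = 0"
  shows "(\<Sum>x\<le>n. pi x * (phi x * ind (x \<le> M \<and> M \<le> x + 2 \<and> (\<forall>h\<le>m. pi x / 2 \<le> pi (x+h)))))
         \<le> (6 / (real m - 2)) * (\<Sum>y\<in>{M<..n}. pi y * phi y)"
proof -
  define R where "R = (\<Sum>y\<in>{M<..n}. pi y * phi y)"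
  define G where "G x = ind (x \<le> M \<and> M \<le> x + 2 \<and> (\<forall>h\<le>m. pi x / 2 \<le> pi (x+h)))" for x
  have R0: "0 \<le> R" unfolding R_def using pi0 phi0 by (intro sum_nonneg mult_nonneg_nonneg) auto
  have m2: "real m - 2 > 0" using m by simp
  have claim1: "(real m - 2) * (pi x * phi x) \<le> 2 * R" if g: "x \<le> M" "M \<le> x + 2" "\<forall>h\<le>m. pi x / 2 \<le> pi (x+h)" for x
  proof -
    have "(\<Sum>h\<in>{3..m}. (pi x / 2) * phi x) \<le> (\<Sum>h\<in>{3..m}. pi (x+h) * phi (x+h))"
    proof (intro sum_mono mult_mono)
      fix h assume h: "h \<in> {3..m}"
      show "pi x / 2 \<le> pi (x+h)" using g h by auto
      show "phi x \<le> phi (x+h)" by (rule mono) simp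
    qed (auto simp: pi0 phi0)
    moreover have "(\<Sum>h\<in>{3..m}. (pi x / 2) * phi x) = (real m - 2) * (pi x * phi x) / 2"
      using m by (simp add: of_nat_diff)
    moreover have "(\<Sum>h\<in>{3..m}. pi (x+h) * phi (x+h)) = (\<Sum>y\<in>(\<lambda>h. x+h) ` {3..m}. pi y * phi y)"
    proof -
      have inj: "inj_on (\<lambda>h. x+h) {3..m}" by (simp add: inj_on_def)
      show ?thesis using sum.reindex[OF inj, of "\<lambda>y. pi y * phi y"] by (simp only: comp_def)
    qed
    moreover have "(\<Sum>y\<in>(\<lambda>h. x+h) ` {3..m}. pi y * phi y) \<le> (\<Sum>y\<in>{M<..M+m}. pi y * phi y)"
      by (intro sum_mono2) (use g pi0 phi0 in auto)
    moreover have "(\<Sum>y\<in>{M<..M+m}. pi y * phi y) \<le> R"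
    proof -
      have "(\<Sum>y\<in>{M<..M+m}. pi y * phi y) = (\<Sum>y\<in>{M<..M+m} \<inter> {..n}. pi y * phi y)"
        using piz by (intro sum.mono_neutral_right) (auto, meson not_le)
      also have "\<dots> \<le> R" unfolding R_def by (intro sum_mono2) (use pi0 phi0 in auto)
      finally show ?thesis .
    qed
    ultimately show ?thesis by linarith
  qed
  have each: "pi x * (phi x * G x) \<le> 2 * R / (real m - 2)" for x
  proof (cases "x \<le> M \<and> M \<le> x + 2 \<and> (\<forall>h\<le>m. pi x / 2 \<le> pi (x+h))")
    case True
    then have "(real m - 2) * (pi x * phi x) \<le> 2 * R" using claim1 by blast
    then show ?thesis using True m2 by (simp add: G_def ind_def field_simps)
  next
    case False
    then have "G x = 0" unfolding G_def ind_def by (simp only: if_False)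
    then show ?thesis using R0 m2 by simp
  qed
  have "(\<Sum>x\<le>n. pi x * (phi x * G x)) = (\<Sum>x\<in>{..n} \<inter> {M-2..M}. pi x * (phi x * G x))"
    by (intro sum.mono_neutral_right) (auto simp: G_def ind_def)
  also have "\<dots> \<le> (\<Sum>x\<in>{M-2..M}. pi x * (phi x * G x))"
    by (intro sum_mono2) (auto simp: pi0 phi0 G_def)
  also have "\<dots> \<le> (\<Sum>x\<in>{M-2..M}. 2 * R / (real m - 2))"
    by (intro sum_mono each)
  also have "\<dots> = real (card {M-2..M}) * (2 * R / (real m - 2))" by simp
  also have "\<dots> \<le> 3 * (2 * R / (real m - 2))"
    by (intro mult_right_mono) (use R0 m2 in auto)
  finally show ?thesis unfolding G_def R_def by (simp add: field_simps)
qed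


definition Mj :: "nat \<Rightarrow> nat \<Rightarrow> nat \<Rightarrow> (nat \<Rightarrow> nat) \<Rightarrow> nat" where
  "Mj n t j d = Max (d ` ({..n} - {j, t}))"
definition Bj :: "nat \<Rightarrow> nat \<Rightarrow> nat \<Rightarrow> (nat \<Rightarrow> nat) \<Rightarrow> bool" where
  "Bj n t j d = (d j \<le> Mj n t j d \<and> Mj n t j d \<le> d j + 2 \<and> d t + 3 \<le> Mj n t j d)"
definition Cj :: "nat \<Rightarrow> nat \<Rightarrow> nat \<Rightarrow> (nat \<Rightarrow> nat) \<Rightarrow> bool" where
  "Cj n t j d = (Mj n t j d < d j \<and> d t + 3 \<le> Mj n t j d)"
definition goodj :: "nat \<Rightarrow> real \<Rightarrow> nat \<Rightarrow> nat \<Rightarrow> bool" where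
  "goodj n q m x = (\<forall>h\<le>m. bpmf n q x / 2 \<le> bpmf n q (x+h))"

lemma Mj_upd: "Mj n t j (d(j:=x)) = Mj n t j d"
  unfolding Mj_def by (intro arg_cong[where f = Max] image_cong) auto

lemma Max_image_mono:
  assumes "finite A" "A \<noteq> {}" "\<And>i. i \<in> A \<Longrightarrow> f i \<le> (g i :: nat)"
  shows "Max (f ` A) \<le> Max (g ` A)"
proof -
  have "\<forall>a\<in>f ` A. a \<le> Max (g ` A)"
  proof
    fix a assume "a \<in> f ` A"
    then obtain i where "i \<in> A" "a = f i" by auto
    then have "a \<le> g i" using assms by auto
    also have "g i \<le> Max (g ` A)" using assms \<open>i \<in> A\<close> by (intro Max_ge) auto
    finally show "a \<le> Max (g ` A)" .
  qed
  then show ?thesis using assms by (subst Max_le_iff) auto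
qed

lemma Wf_upd_mono:
  assumes "j \<noteq> t" "t \<le> n" "n \<ge> 1" "x \<le> y"
  shows "Wf n t (d(j:=x)) \<le> Wf n t (d(j:=y))"
proof -
  have ne: "{..n} - {t} \<noteq> {}" using assms
    by (metis Diff_eq_empty_iff atMost_iff le_SucE le_zero_eq nat_le_linear not_one_le_zero singleton_iff subset_eq insertCI one_neq_zero)
  have "MX n t (d(j:=x)) \<le> MX n t (d(j:=y))"
    unfolding MX_def by (rule Max_image_mono) (use ne assms in auto)
  then show ?thesis unfolding Wf_def using assms by auto
qed

lemma shift_Ex:
  assumes j: "j \<le> n" "j \<noteq> t" and t: "t \<le> n" and n: "n \<ge> 1" and m: "m \<ge> 3" and vp: "validp n p"
  shows "EE n p (\<lambda>d. Wf n t d * ind (Bj n t j d \<and> goodj n (p j) m (d j)))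
       \<le> (6 / (real m - 2)) * EE n p (\<lambda>d. Wf n t d * ind (Cj n t j d))"
proof -
  have pj: "0 \<le> p j" "p j \<le> 1" using vp j by (auto simp: validp_def)
  have inner: "(\<Sum>x\<le>n. bpmf n (p j) x * (Wf n t (d(j:=x)) * ind (Bj n t j (d(j:=x)) \<and> goodj n (p j) m ((d(j:=x)) j))))
      \<le> (6 / (real m - 2)) * (\<Sum>x\<le>n. bpmf n (p j) x * (Wf n t (d(j:=x)) * ind (Cj n t j (d(j:=x)))))" for d
  proof -
    define M where "M = Mj n t j d"
    define T where "T = d t"
    have dt: "\<And>x. (d(j:=x)) t = T" using j by (simp add: T_def)
    have MM: "\<And>x. Mj n t j (d(j:=x)) = M" by (simp add: M_def Mj_upd)
    have m2: "real m - 2 > 0" using m by simp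
    show ?thesis
    proof (cases "T + 3 \<le> M")
      case False
      have "(\<Sum>x\<le>n. bpmf n (p j) x * (Wf n t (d(j:=x)) * ind (Bj n t j (d(j:=x)) \<and> goodj n (p j) m ((d(j:=x)) j)))) = 0"
        using False by (intro sum.neutral) (auto simp: Bj_def MM dt ind_def T_def)
      moreover have "0 \<le> (6 / (real m - 2)) * (\<Sum>x\<le>n. bpmf n (p j) x * (Wf n t (d(j:=x)) * ind (Cj n t j (d(j:=x)))))"
        using m2 pj by (intro mult_nonneg_nonneg sum_nonneg) (auto intro: bpmf_nonneg Wf_nonneg)
      ultimately show ?thesis by simp
    next
      case True
      have L: "(\<Sum>x\<le>n. bpmf n (p j) x * (Wf n t (d(j:=x)) * ind (Bj n t j (d(j:=x)) \<and> goodj n (p j) m ((d(j:=x)) j))))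
          = (\<Sum>x\<le>n. bpmf n (p j) x * (Wf n t (d(j:=x)) * ind (x \<le> M \<and> M \<le> x + 2 \<and> (\<forall>h\<le>m. bpmf n (p j) x / 2 \<le> bpmf n (p j) (x+h)))))"
        using True j(2) by (intro sum.cong refl) (simp add: Bj_def MM dt goodj_def T_def)
      have R: "(\<Sum>x\<le>n. bpmf n (p j) x * (Wf n t (d(j:=x)) * ind (Cj n t j (d(j:=x)))))
          = (\<Sum>y\<in>{M<..n}. bpmf n (p j) y * Wf n t (d(j:=y)))"
      proof -
        have "(\<Sum>x\<le>n. bpmf n (p j) x * (Wf n t (d(j:=x)) * ind (Cj n t j (d(j:=x)))))
            = (\<Sum>x\<le>n. if M < x then bpmf n (p j) x * Wf n t (d(j:=x)) else 0)"
          using True j(2) by (intro sum.cong refl) (simp add: Cj_def MM dt ind_def T_def)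
        also have "\<dots> = (\<Sum>y\<in>{x\<in>{..n}. M < x}. bpmf n (p j) y * Wf n t (d(j:=y)))"
          by (rule sum.inter_filter[symmetric]) simp
        also have "{x\<in>{..n}. M < x} = {M<..n}" by auto
        finally show ?thesis .
      qed
      show ?thesis unfolding L R
        by (rule shift_core[OF m])
           (use pj j t n in \<open>auto intro: bpmf_nonneg Wf_nonneg Wf_upd_mono bpmf_zero\<close>)
    qed
  qed
  have "EE n p (\<lambda>d. Wf n t d * ind (Bj n t j d \<and> goodj n (p j) m (d j)))
      = (\<Sum>d\<in>PiE ({..n}-{j}) (\<lambda>_. {..n}). (\<Prod>i\<in>{..n}-{j}. bpmf n (p i) (d i)) *
           (\<Sum>x\<le>n. bpmf n (p j) x * (Wf n t (d(j:=x)) * ind (Bj n t j (d(j:=x)) \<and> goodj n (p j) m ((d(j:=x)) j)))))"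
    by (rule Ex_split[OF j(1)])
  also have "\<dots> \<le> (\<Sum>d\<in>PiE ({..n}-{j}) (\<lambda>_. {..n}). (\<Prod>i\<in>{..n}-{j}. bpmf n (p i) (d i)) *
           ((6 / (real m - 2)) * (\<Sum>x\<le>n. bpmf n (p j) x * (Wf n t (d(j:=x)) * ind (Cj n t j (d(j:=x)))))))"
    using vp by (intro sum_mono mult_left_mono inner prod_nonneg) (auto simp: validp_def intro: bpmf_nonneg)
  also have "\<dots> = (6 / (real m - 2)) * (\<Sum>d\<in>PiE ({..n}-{j}) (\<lambda>_. {..n}). (\<Prod>i\<in>{..n}-{j}. bpmf n (p i) (d i)) *
           (\<Sum>x\<le>n. bpmf n (p j) x * (Wf n t (d(j:=x)) * ind (Cj n t j (d(j:=x))))))"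
    by (simp add: sum_distrib_left mult_ac)
  also have "(\<Sum>d\<in>PiE ({..n}-{j}) (\<lambda>_. {..n}). (\<Prod>i\<in>{..n}-{j}. bpmf n (p i) (d i)) *
           (\<Sum>x\<le>n. bpmf n (p j) x * (Wf n t (d(j:=x)) * ind (Cj n t j (d(j:=x))))))
      = EE n p (\<lambda>d. Wf n t d * ind (Cj n t j d))"
    by (rule Ex_split[OF j(1), symmetric])
  finally show ?thesis .
qed

lemma Cj_disjoint:
  assumes "n \<ge> 2" "t \<le> n"
  shows "(\<Sum>j\<in>{..n}-{t}. ind (Cj n t j d)) \<le> 1"
proof -
  have "card {j\<in>{..n}-{t}. Cj n t j d} \<le> Suc 0"
  proof (subst card_le_Suc0_iff_eq)
    show "finite {j\<in>{..n}-{t}. Cj n t j d}" by simp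
    show "\<forall>a\<in>{j\<in>{..n}-{t}. Cj n t j d}. \<forall>b\<in>{j\<in>{..n}-{t}. Cj n t j d}. a = b"
    proof (intro ballI, rule ccontr)
      fix a b assume a: "a \<in> {j\<in>{..n}-{t}. Cj n t j d}" and b: "b \<in> {j\<in>{..n}-{t}. Cj n t j d}" and ab: "a \<noteq> b"
      have "d b \<le> Mj n t a d" unfolding Mj_def using a b ab by (intro Max_ge) auto
      moreover have "d a \<le> Mj n t b d" unfolding Mj_def using a b ab by (intro Max_ge) auto
      ultimately show False using a b by (auto simp: Cj_def)
    qed
  qed
  moreover have "(\<Sum>j\<in>{..n}-{t}. ind (Cj n t j d)) = real (card {j\<in>{..n}-{t}. Cj n t j d})"
  proof -
    have e: "({..n} - {t}) \<inter> {j. Cj n t j d} = {j\<in>{..n}-{t}. Cj n t j d}" by auto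
    show ?thesis unfolding ind_def sum.If_cases[OF finite_Diff[OF finite_atMost]] e by simp
  qed
  ultimately show ?thesis by simp
qed


definition sdq :: "nat \<Rightarrow> real \<Rightarrow> real" where "sdq n q = sqrt (real n * (q * (1 - q)))"
definition devq :: "nat \<Rightarrow> real \<Rightarrow> real \<Rightarrow> real" where "devq n s q = 2*s*sdq n q + 2*s^2"
definition Gev :: "nat \<Rightarrow> (nat \<Rightarrow> real) \<Rightarrow> nat \<Rightarrow> real \<Rightarrow> (nat \<Rightarrow> nat) \<Rightarrow> bool" where
  "Gev n p t s d = ((\<forall>j\<le>n. real (d j) < real n * p j + devq n s (p j)) \<and> real (d t) > real n * p t - devq n s (p t))"

lemma sdq_sq: assumes "0 \<le> q" "q \<le> 1" shows "(sdq n q)^2 = real n * (q * (1 - q))"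
proof -
  have "0 \<le> real n * (q * (1 - q))" using assms by (intro mult_nonneg_nonneg) auto
  then show ?thesis unfolding sdq_def by simp
qed

lemma sdq_sq': "0 \<le> q \<Longrightarrow> q \<le> 1 \<Longrightarrow> (sdq n q)^2 = real n * q * (1 - q)"
  using sdq_sq by (simp add: mult.assoc)

lemma sdq_nonneg: assumes "0 \<le> q" "q \<le> 1" shows "0 \<le> sdq n q"
  using assms unfolding sdq_def by (intro real_sqrt_ge_zero mult_nonneg_nonneg) auto

lemma Ex_sum: "finite J \<Longrightarrow> EE n p (\<lambda>d. \<Sum>j\<in>J. f j d) = (\<Sum>j\<in>J. EE n p (f j))"
  unfolding EE_def by (simp add: sum_distrib_left sum.swap[of _ J])

lemma tail_up:
  assumes j: "j \<le> n" and vp: "validp n p" and s: "s \<ge> 0"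
  shows "EE n p (\<lambda>d. ind (real (d j) \<ge> real n * p j + devq n s (p j))) \<le> exp (-(s^2))"
proof -
  have q: "0 \<le> p j" "p j \<le> 1" using vp j by (auto simp: validp_def)
  have "EE n p (\<lambda>d. ind (real (d j) \<ge> real n * p j + devq n s (p j)))
      = (\<Sum>x\<le>n. bpmf n (p j) x * ind (real x \<ge> real n * p j + devq n s (p j)))"
    by (rule Ex_marginal[OF j])
  also have "\<dots> = (\<Sum>x\<le>n. bpmf n (p j) x * (if 1 * (real x - n * p j) \<ge> devq n s (p j) then 1 else 0))"
    by (intro sum.cong refl) (auto simp: ind_def)
  also have "\<dots> \<le> exp (-(s^2))"
    by (rule bpmf_tail_gen[OF q s sdq_nonneg[OF q] sdq_sq'[OF q]]) (auto simp: devq_def)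
  finally show ?thesis .
qed

lemma tail_low:
  assumes j: "j \<le> n" and vp: "validp n p" and s: "s \<ge> 0"
  shows "EE n p (\<lambda>d. ind (real (d j) \<le> real n * p j - devq n s (p j))) \<le> exp (-(s^2))"
proof -
  have q: "0 \<le> p j" "p j \<le> 1" using vp j by (auto simp: validp_def)
  have "EE n p (\<lambda>d. ind (real (d j) \<le> real n * p j - devq n s (p j)))
      = (\<Sum>x\<le>n. bpmf n (p j) x * ind (real x \<le> real n * p j - devq n s (p j)))"
    by (rule Ex_marginal[OF j])
  also have "\<dots> = (\<Sum>x\<le>n. bpmf n (p j) x * (if (-1) * (real x - n * p j) \<ge> devq n s (p j) then 1 else 0))"
    by (intro sum.cong refl) (auto simp: ind_def)
  also have "\<dots> \<le> exp (-(s^2))"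
    by (rule bpmf_tail_gen[OF q s sdq_nonneg[OF q] sdq_sq'[OF q]]) (auto simp: devq_def)
  finally show ?thesis .
qed

lemma probG:
  assumes vp: "validp n p" and t: "t \<le> n" and s: "s \<ge> 0"
  shows "EE n p (\<lambda>d. ind (\<not> Gev n p t s d)) \<le> (real n + 2) * exp (-(s^2))"
proof -
  have pw: "ind (\<not> Gev n p t s d) \<le> (\<Sum>j\<le>n. ind (real (d j) \<ge> real n * p j + devq n s (p j)))
             + ind (real (d t) \<le> real n * p t - devq n s (p t))" for d
  proof (cases "Gev n p t s d")
    case True then show ?thesis by (simp add: ind_def sum_nonneg)
  next
    case False
    then show ?thesis
    proof (cases "real (d t) \<le> real n * p t - devq n s (p t)")
      case True then show ?thesis by (simp add: ind_def sum_nonneg)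
    next
      case F2: False
      then obtain j where j: "j \<le> n" "real (d j) \<ge> real n * p j + devq n s (p j)"
        using False unfolding Gev_def by (auto simp: not_less)
      have "ind (real (d j) \<ge> real n * p j + devq n s (p j)) \<le> (\<Sum>j\<le>n. ind (real (d j) \<ge> real n * p j + devq n s (p j)))"
        by (rule member_le_sum) (use j in auto)
      then show ?thesis using j False by (simp add: ind_def)
    qed
  qed
  have "EE n p (\<lambda>d. ind (\<not> Gev n p t s d)) \<le> EE n p (\<lambda>d. (\<Sum>j\<le>n. ind (real (d j) \<ge> real n * p j + devq n s (p j)))
             + ind (real (d t) \<le> real n * p t - devq n s (p t)))"
    by (intro Ex_mono vp pw)
  also have "\<dots> = (\<Sum>j\<le>n. EE n p (\<lambda>d. ind (real (d j) \<ge> real n * p j + devq n s (p j))))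
             + EE n p (\<lambda>d. ind (real (d t) \<le> real n * p t - devq n s (p t)))"
    by (simp add: Ex_add Ex_sum)
  also have "\<dots> \<le> (\<Sum>j\<le>n. exp (-(s^2))) + exp (-(s^2))"
    by (intro add_mono sum_mono tail_up tail_low vp s t) auto
  also have "\<dots> = (real n + 2) * exp (-(s^2))" by (simp add: algebra_simps)
  finally show ?thesis .
qed

lemma Wf_le_n: "d \<in> DV n \<Longrightarrow> t \<le> n \<Longrightarrow> n \<ge> 1 \<Longrightarrow> Wf n t d \<le> real n"
proof -
  assume d: "d \<in> DV n" and t: "t \<le> n" and n: "n \<ge> 1"
  have ne: "{..n} - {t} \<noteq> {}" using t n
    by (metis Diff_eq_empty_iff atMost_iff le_SucE le_zero_eq nat_le_linear not_one_le_zero singleton_iff subset_eq insertCI one_neq_zero)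
  have "MX n t d \<le> n" unfolding MX_def using d ne by (subst Max_le_iff) (auto simp: DV_def)
  moreover have "d t \<le> n" using d t by (auto simp: DV_def)
  ultimately show ?thesis unfolding Wf_def by simp
qed

lemma Wf_le_A:
  assumes d: "d \<in> DV n" and t: "t \<le> n" and n: "n \<ge> 1" and vp: "validp n p"
    and pmax: "\<forall>j\<le>n. p j \<le> p t" and s: "s \<ge> 0" and G: "Gev n p t s d"
  shows "Wf n t d \<le> 5 * s * sdq n (p t) + 5 * s^2"
proof (cases "MX n t d \<le> d t")
  case True
  have "0 \<le> p t" "p t \<le> 1" using vp t by (auto simp: validp_def)
  then show ?thesis unfolding Wf_def using True s sdq_nonneg[of "p t" n] by simp
next
  case False
  have ne: "{..n} - {t} \<noteq> {}" using t n
    by (metis Diff_eq_empty_iff atMost_iff le_SucE le_zero_eq nat_le_linear not_one_le_zero singleton_iff subset_eq insertCI one_neq_zero)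
  have "MX n t d \<in> d ` ({..n} - {t})" unfolding MX_def using ne by (intro Max_in) auto
  then obtain k where "k \<in> {..n} - {t}" "MX n t d = d k" by blast
  then have k: "k \<le> n" "k \<noteq> t" "d k = MX n t d" by auto
  have qk: "0 \<le> p k" "p k \<le> p t" "p t \<le> 1" using vp pmax k t by (auto simp: validp_def)
  have qt: "0 \<le> p t" using vp t by (auto simp: validp_def)
  have "Wf n t d = real (d k) - real (d t)" unfolding Wf_def using False k by simp
  also have "\<dots> \<le> real n * p k + devq n s (p k) - (real n * p t - devq n s (p t))"
    using G k unfolding Gev_def by (smt (verit))
  also have "\<dots> \<le> 5 * s * sdq n (p t) + 5 * s^2"
    unfolding devq_def
    by (rule R1[OF _ qk s sdq_nonneg[OF qt qk(3)] sdq_sq[OF qt qk(3)] sdq_nonneg sdq_sq]) (use qk in auto)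
  finally show ?thesis .
qed


lemma pointwise2:
  assumes d: "d \<in> DV n" and t: "t \<le> n" and n: "n \<ge> 2" and vp: "validp n p"
    and pmax: "\<forall>j\<le>n. p j \<le> p t" and s: "s \<ge> 1"
    and big: "sdq n (p t) \<ge> 240 * s" and m1: "m \<ge> 1" and m2: "real m \<le> sdq n (p t) / (30 * s)"
  shows "Fb n t d \<le> real n * ind (\<not> Gev n p t s d)
            + (\<Sum>j\<in>{..n}-{t}. Wf n t d * ind (Bj n t j d \<and> goodj n (p j) m (d j)))"
proof -
  have n1: "n \<ge> 1" using n by simp
  have S0: "0 \<le> (\<Sum>j\<in>{..n}-{t}. Wf n t d * ind (Bj n t j d \<and> goodj n (p j) m (d j)))"
    by (intro sum_nonneg mult_nonneg_nonneg) (auto simp: Wf_nonneg)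
  show ?thesis
  proof (cases "Gev n p t s d")
    case False
    have "Fb n t d \<le> Wf n t d" by (simp add: Fb_def Wf_nonneg)
    also have "\<dots> \<le> real n" by (rule Wf_le_n[OF d t n1])
    finally show ?thesis using False S0 by (simp add: ind_def)
  next
    case G: True
    show ?thesis
    proof (cases "Bev n t d")
      case False
      then show ?thesis using S0 by (simp add: Fb_def ind_def)
    next
      case True
      then obtain j k where jk: "j \<le> n" "k \<le> n" "j \<noteq> t" "k \<noteq> t" "j \<noteq> k" "d k = MX n t d"
          "MX n t d \<le> d j + 2" "d t + 3 \<le> MX n t d" unfolding Bev_def by blast
      have ne: "{..n} - {t} \<noteq> {}" using jk by auto
      have djMX: "d j \<le> MX n t d" unfolding MX_def using jk by (intro Max_ge) auto
      have MjMX: "Mj n t j d = MX n t d"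
      proof (rule antisym)
        show "Mj n t j d \<le> MX n t d" unfolding Mj_def MX_def
          using jk by (intro Max_mono) auto
        show "MX n t d \<le> Mj n t j d" unfolding Mj_def using jk by (metis Max_ge finite_Diff finite_atMost finite_imageI image_eqI atMost_iff insertE Diff_iff singletonD)
      qed
      have Bj: "Bj n t j d" unfolding Bj_def MjMX using djMX jk by simp
      have qj: "0 \<le> p j" "p j \<le> p t" "p t \<le> 1" using vp pmax jk t by (auto simp: validp_def)
      have qt: "0 \<le> p t" using vp t by (auto simp: validp_def)
      have Gj: "real (d j) < real n * p j + (2*s*sdq n (p j) + 2*s^2)" using G jk unfolding Gev_def devq_def by blast
      have Gt: "real (d t) > real n * p t - (2*s*sdq n (p t) + 2*s^2)" using G unfolding Gev_def devq_def by blast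
      have djt: "d t + 1 \<le> d j" using jk by simp
      have xl: "real (d j) \<ge> real n * p t - (2*s*sdq n (p t) + 2*s^2)" using Gt djt by linarith
      have R2i: "\<And>y. real (d j) \<le> y \<Longrightarrow> y \<le> real (d j) + real m - 1 \<Longrightarrow>
          (real n - y) * p j \<ge> (1 - 1/(2*real m)) * (y + 1) * (1 - p j) \<and> (sdq n (p j))^2 > 0"
        by (rule R2[OF _ qj s sdq_nonneg[OF qt qj(3)] sdq_sq[OF qt qj(3)] sdq_nonneg sdq_sq big _ m2 Gj xl])
           (use qj m1 in auto)
      have "(sdq n (p j))^2 > 0" using R2i[of "real (d j)"] m1 by simp
      then have "real n * (p j * (1 - p j)) > 0" using sdq_sq[of "p j" n] qj by simp
      then have pjpos: "p j * (1 - p j) > 0" by (simp add: zero_less_mult_iff)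
      have q01: "0 < p j" "p j < 1"
      proof -
        show "0 < p j" using pjpos qj by (cases "p j = 0") auto
        show "p j < 1" using pjpos qj by (cases "p j = 1") auto
      qed
      have good: "goodj n (p j) m (d j)"
        unfolding goodj_def
      proof (intro allI impI)
        fix h assume h: "h \<le> m"
        show "bpmf n (p j) (d j) / 2 \<le> bpmf n (p j) (d j + h)"
        proof (rule good_from_ratio[OF q01, of "1/(2*real m)" m "d j" n h])
          show "0 < 1 / (2 * real m)" using m1 by simp
          show "1 / (2 * real m) * real m \<le> 1/2" using m1 by simp
          show "h \<le> m" by (rule h)
          fix y :: nat assume y: "d j \<le> y" "y < d j + m"
          have "real y \<le> real (d j) + real m - 1" using y by linarith
          then show "(real n - real y) * p j \<ge> (1 - 1/(2*real m)) * (real y + 1) * (1 - p j)"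
            using R2i[of "real y"] y by simp
        qed
      qed
      have "Fb n t d = Wf n t d" using True by (simp add: Fb_def)
      also have "\<dots> = Wf n t d * ind (Bj n t j d \<and> goodj n (p j) m (d j))" using Bj good by (simp add: ind_def)
      also have "\<dots> \<le> (\<Sum>j\<in>{..n}-{t}. Wf n t d * ind (Bj n t j d \<and> goodj n (p j) m (d j)))"
        by (rule member_le_sum) (use jk in \<open>auto intro: mult_nonneg_nonneg Wf_nonneg\<close>)
      finally show ?thesis using G by (simp add: ind_def)
    qed
  qed
qed


lemma profile_prob_nonneg:
  assumes vp: "validp n p" and E: "E \<subseteq> all_edges n"
  shows "0 \<le> profile_prob n p E"
  unfolding profile_prob_def
proof (intro prod_nonneg ballI)
  fix e assume e: "e \<in> all_edges n"
  then have "snd e \<le> n" by (auto simp: all_edges_def)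
  then show "0 \<le> (if e \<in> E then p (snd e) else 1 - p (snd e))" using vp by (auto simp: validp_def)
qed

lemma reduction:
  assumes vp: "validp n p" and t: "t \<le> n" and n: "n \<ge> 1"
  shows "avd_expected_gap n p t \<le> 2 + EE n p (Fb n t)"
proof -
  have "avd_expected_gap n p t \<le> (\<Sum>E\<in>Pow (all_edges n). profile_prob n p E *
        (2 + Fb n t (restrict (\<lambda>j. indeg n j E) {..n})))"
    unfolding avd_expected_gap_def
  proof (intro sum_mono mult_left_mono)
    fix E assume E: "E \<in> Pow (all_edges n)"
    have "Fb n t (restrict (\<lambda>j. indeg n j E) {..n}) = Fb n t (\<lambda>j. indeg n j E)"
      by (rule Fb_cong[OF t]) simp
    then show "real (max_indeg n E) - real (indeg n (avd_winner n t E) E) \<le> 2 + Fb n t (restrict (\<lambda>j. indeg n j E) {..n})"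
      using gap_bound[OF t n] by simp
    show "0 \<le> profile_prob n p E" using profile_prob_nonneg[OF vp] E by auto
  qed
  also have "\<dots> = 2 * (\<Sum>E\<in>Pow (all_edges n). profile_prob n p E * (\<lambda>_. 1) (restrict (\<lambda>j. indeg n j E) {..n}))
      + (\<Sum>E\<in>Pow (all_edges n). profile_prob n p E * Fb n t (restrict (\<lambda>j. indeg n j E) {..n}))"
    by (simp add: algebra_simps sum.distrib sum_distrib_left)
  also have "\<dots> = 2 + EE n p (Fb n t)"
  proof -
    have "(\<Sum>E\<in>Pow (all_edges n). profile_prob n p E * (\<lambda>_. 1::real) (restrict (\<lambda>j. indeg n j E) {..n})) = 1"
      using factorization[of n p "\<lambda>_. 1"] Ex_const[of n p 1] by simp
    then show ?thesis using factorization[of n p "Fb n t"] by simp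
  qed
  finally show ?thesis .
qed

lemma ExWf:
  assumes vp: "validp n p" and t: "t \<le> n" and n: "n \<ge> 1" and pmax: "\<forall>j\<le>n. p j \<le> p t"
    and s: "s \<ge> 0" and nE: "real n * ((real n + 2) * exp (-(s^2))) \<le> 1"
  shows "EE n p (Wf n t) \<le> 5 * s * sdq n (p t) + 5 * s^2 + 1"
proof -
  have qt: "0 \<le> p t" "p t \<le> 1" using vp t by (auto simp: validp_def)
  have A0: "0 \<le> 5 * s * sdq n (p t) + 5 * s^2" using s sdq_nonneg[OF qt] by simp
  have "EE n p (Wf n t) \<le> EE n p (\<lambda>d. (5 * s * sdq n (p t) + 5 * s^2) + real n * ind (\<not> Gev n p t s d))"
  proof (rule Ex_mono[OF vp])
    fix d assume d: "d \<in> DV n"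
    show "Wf n t d \<le> (5 * s * sdq n (p t) + 5 * s^2) + real n * ind (\<not> Gev n p t s d)"
    proof (cases "Gev n p t s d")
      case True then show ?thesis using Wf_le_A[OF d t n vp pmax s True] by (simp add: ind_def)
    next
      case False then show ?thesis using Wf_le_n[OF d t n] A0 by (simp add: ind_def)
    qed
  qed
  also have "\<dots> = (5 * s * sdq n (p t) + 5 * s^2) + real n * EE n p (\<lambda>d. ind (\<not> Gev n p t s d))"
    by (simp add: Ex_add Ex_const Ex_cmult)
  also have "real n * EE n p (\<lambda>d. ind (\<not> Gev n p t s d)) \<le> real n * ((real n + 2) * exp (-(s^2)))"
    by (intro mult_left_mono probG vp t s) simp
  finally show ?thesis using nE by linarith
qed


lemma c_bound:
  fixes sd s :: real and m :: nat
  assumes s: "s \<ge> 1" and big: "sd \<ge> 240 * s" and m: "m = nat \<lfloor>sd / (30 * s)\<rfloor>"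
  shows "real m \<le> sd / (30 * s)" "m \<ge> 8" "6 / (real m - 2) \<le> 480 * s / sd"
proof -
  define r where "r = sd / (30 * s)"
  have sd0: "sd > 0" using s big by simp
  have r8: "r \<ge> 8" using big s by (simp add: r_def field_simps)
  have fl: "real_of_int \<lfloor>r\<rfloor> \<le> r" "r < real_of_int \<lfloor>r\<rfloor> + 1" by linarith+
  have fl0: "\<lfloor>r\<rfloor> \<ge> 0" using r8 by linarith
  have mr: "real m = real_of_int \<lfloor>r\<rfloor>" using m fl0 by (simp add: r_def)
  show "real m \<le> sd / (30 * s)" using mr fl by (simp add: r_def)
  have "real m > 7" using mr fl r8 by linarith
  then show m8: "m \<ge> 8" by simp
  have a: "6 / (real m - 2) \<le> 8 / real m" using m8 by (simp add: field_simps)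
  have b: "8 / real m \<le> 16 / r"
  proof -
    have "r \<le> 2 * real m" using mr fl r8 by linarith
    then show ?thesis using m8 r8 by (simp add: field_simps)
  qed
  have c: "16 / r = 480 * s / sd" using s sd0 by (simp add: r_def field_simps)
  show "6 / (real m - 2) \<le> 480 * s / sd" using a b c by linarith
qed

lemma final_arith:
  fixes s sd c :: real
  assumes s: "s \<ge> 1" and big: "sd \<ge> 240 * s" and c: "0 \<le> c" "c \<le> 480 * s / sd"
  shows "c * (5 * s * sd + 5 * s^2 + 1) \<le> 2410 * s^2 + 2"
proof -
  have sd0: "sd > 0" using s big by simp
  define k where "k = s / sd"
  have k0: "0 < k" using s sd0 by (simp add: k_def)
  have k1: "k \<le> 1/240" using big s sd0 by (simp add: k_def field_simps)
  have ks: "k * sd = s" using sd0 by (simp add: k_def)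
  have "c * (5 * s * sd + 5 * s^2 + 1) \<le> (480 * k) * (5 * s * sd + 5 * s^2 + 1)"
    using c s sd0 by (intro mult_right_mono) (auto simp: k_def)
  also have "\<dots> = 2400 * s * (k * sd) + 2400 * s^2 * k + 480 * k" by (simp add: algebra_simps)
  also have "\<dots> = 2400 * s^2 + 2400 * s^2 * k + 480 * k" using ks by (simp add: power2_eq_square)
  also have "\<dots> \<le> 2400 * s^2 + 2400 * s^2 * (1/240) + 480 * (1/240)"
    using k1 by (intro add_mono mult_left_mono) auto
  finally show ?thesis by simp
qed

lemma ExFb_bound:
  assumes vp: "validp n p" and t: "t \<le> n" and n: "n \<ge> 2" and pmax: "\<forall>j\<le>n. p j \<le> p t"
    and s: "s \<ge> 1" and nE: "real n * ((real n + 2) * exp (-(s^2))) \<le> 1"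
  shows "EE n p (Fb n t) \<le> 2410 * s^2 + 3"
proof -
  have n1: "n \<ge> 1" using n by simp
  have qt: "0 \<le> p t" "p t \<le> 1" using vp t by (auto simp: validp_def)
  define sd where "sd = sdq n (p t)"
  have sd0: "0 \<le> sd" unfolding sd_def by (rule sdq_nonneg[OF qt])
  have EW: "EE n p (Wf n t) \<le> 5 * s * sd + 5 * s^2 + 1"
    unfolding sd_def using ExWf[OF vp t n1 pmax _ nE] s by simp
  show ?thesis
  proof (cases "sd < 240 * s")
    case True
    have "EE n p (Fb n t) \<le> EE n p (Wf n t)"
      by (rule Ex_mono[OF vp]) (simp add: Fb_def Wf_nonneg)
    also have "\<dots> \<le> 5 * s * sd + 5 * s^2 + 1" by (rule EW)
    also have "5 * s * sd \<le> 5 * s * (240 * s)" using True s sd0 by (intro mult_left_mono) auto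
    finally have "EE n p (Fb n t) \<le> 1205 * s^2 + 1" by (simp add: power2_eq_square)
    moreover have "0 \<le> s^2" by simp
    ultimately show ?thesis by linarith
  next
    case False
    then have big: "sd \<ge> 240 * s" by simp
    define m where "m = nat \<lfloor>sd / (30 * s)\<rfloor>"
    note cb = c_bound[OF s big m_def]
    define c where "c = 6 / (real m - 2)"
    have c0: "0 \<le> c" using cb(2) by (simp add: c_def)
    have m3: "m \<ge> 3" "m \<ge> 1" using cb(2) by auto
    have "EE n p (Fb n t) \<le> EE n p (\<lambda>d. real n * ind (\<not> Gev n p t s d)
            + (\<Sum>j\<in>{..n}-{t}. Wf n t d * ind (Bj n t j d \<and> goodj n (p j) m (d j))))"
      by (rule Ex_mono[OF vp], rule pointwise2[OF _ t n vp pmax s]) (use big m3 cb(1) in \<open>auto simp: sd_def\<close>)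
    also have "\<dots> = real n * EE n p (\<lambda>d. ind (\<not> Gev n p t s d))
            + (\<Sum>j\<in>{..n}-{t}. EE n p (\<lambda>d. Wf n t d * ind (Bj n t j d \<and> goodj n (p j) m (d j))))"
      by (simp add: Ex_add Ex_cmult Ex_sum)
    also have "real n * EE n p (\<lambda>d. ind (\<not> Gev n p t s d)) \<le> 1"
    proof -
      have "real n * EE n p (\<lambda>d. ind (\<not> Gev n p t s d)) \<le> real n * ((real n + 2) * exp (-(s^2)))"
        using s by (intro mult_left_mono probG vp t) auto
      then show ?thesis using nE by linarith
    qed
    also have "(\<Sum>j\<in>{..n}-{t}. EE n p (\<lambda>d. Wf n t d * ind (Bj n t j d \<and> goodj n (p j) m (d j))))
        \<le> (\<Sum>j\<in>{..n}-{t}. c * EE n p (\<lambda>d. Wf n t d * ind (Cj n t j d)))"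
      unfolding c_def by (intro sum_mono shift_Ex) (use t n1 m3 vp in auto)
    also have "\<dots> = c * EE n p (\<lambda>d. \<Sum>j\<in>{..n}-{t}. Wf n t d * ind (Cj n t j d))"
      by (simp add: Ex_sum sum_distrib_left)
    also have "EE n p (\<lambda>d. \<Sum>j\<in>{..n}-{t}. Wf n t d * ind (Cj n t j d)) \<le> EE n p (Wf n t)"
    proof (rule Ex_mono[OF vp])
      fix d assume "d \<in> DV n"
      have "(\<Sum>j\<in>{..n}-{t}. Wf n t d * ind (Cj n t j d)) = Wf n t d * (\<Sum>j\<in>{..n}-{t}. ind (Cj n t j d))"
        by (simp add: sum_distrib_left)
      also have "\<dots> \<le> Wf n t d * 1" by (intro mult_left_mono Cj_disjoint n t Wf_nonneg)
      finally show "(\<Sum>j\<in>{..n}-{t}. Wf n t d * ind (Cj n t j d)) \<le> Wf n t d" by simp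
    qed
    then have "c * EE n p (\<lambda>d. \<Sum>j\<in>{..n}-{t}. Wf n t d * ind (Cj n t j d)) \<le> c * (5 * s * sd + 5 * s^2 + 1)"
      using EW c0 by (intro mult_left_mono) auto
    also have "\<dots> \<le> 2410 * s^2 + 2"
      by (rule final_arith[OF s big c0]) (use cb(3) in \<open>simp add: c_def\<close>)
    finally show ?thesis by simp
  qed
qed


lemma ln3: "ln (3::real) \<ge> 1"
proof -
  have "exp 1 \<le> (3::real)" by (rule exp_le)
  then have "ln (exp 1) \<le> ln (3::real)" by (subst ln_le_cancel_iff) auto
  then show ?thesis by simp
qed

theorem mainTheorem4:
  "\<exists>C::real. \<exists>n0::nat. \<forall>n \<ge> n0. \<forall>(p :: nat \<Rightarrow> real) (t :: nat).
     (\<forall>j \<in> agents n. 0 \<le> p j \<and> p j \<le> 1) \<longrightarrow>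
     t \<in> agents n \<longrightarrow> (\<forall>j \<in> agents n. p j \<le> p t) \<longrightarrow>
     avd_expected_gap n p t \<le> C * (ln (real n))^2"
proof (intro exI allI impI)
  fix n :: nat and p :: "nat \<Rightarrow> real" and t :: nat
  assume n: "3 \<le> n" and pv: "\<forall>j \<in> agents n. 0 \<le> p j \<and> p j \<le> 1"
    and tn: "t \<in> agents n" and pm: "\<forall>j \<in> agents n. p j \<le> p t"
  have vp: "validp n p" using pv by (simp add: validp_def agents_def)
  have t: "t \<le> n" using tn by (simp add: agents_def)
  have pmax: "\<forall>j\<le>n. p j \<le> p t" using pm by (simp add: agents_def)
  have n0: "real n > 0" using n by simp
  have lnn: "ln (real n) \<ge> 1"
  proof -
    have "ln (3::real) \<le> ln (real n)" using n by (subst ln_le_cancel_iff) auto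
    then show ?thesis using ln3 by linarith
  qed
  define s where "s = sqrt (3 * ln (real n))"
  have s2: "s^2 = 3 * ln (real n)" unfolding s_def using lnn by simp
  have s1: "s \<ge> 1"
  proof -
    have "1 \<le> s^2" using s2 lnn by simp
    then show ?thesis unfolding s_def using lnn by (simp add: real_le_rsqrt)
  qed
  have ex: "exp (-(s^2)) = 1 / real n ^ 3"
  proof -
    have "exp (3 * ln (real n)) = exp (ln (real n)) ^ 3"
      using exp_of_nat_mult[of 3 "ln (real n)"] by simp
    also have "\<dots> = real n ^ 3" using n0 by simp
    finally show ?thesis using s2 by (simp add: exp_minus field_simps)
  qed
  have nE: "real n * ((real n + 2) * exp (-(s^2))) \<le> 1"
  proof -
    have "3 * real n \<le> real n * real n" using n by (intro mult_right_mono) auto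
    then have "real n + 2 \<le> real n * real n" using n by linarith
    then have "real n * (real n + 2) \<le> real n * (real n * real n)" using n0 by (intro mult_left_mono) auto
    then show ?thesis unfolding ex using n0 by (simp add: field_simps power3_eq_cube)
  qed
  have "avd_expected_gap n p t \<le> 2 + EE n p (Fb n t)"
    by (rule reduction[OF vp t]) (use n in simp)
  also have "EE n p (Fb n t) \<le> 2410 * s^2 + 3"
    by (rule ExFb_bound[OF vp t _ pmax s1 nE]) (use n in simp)
  finally have "avd_expected_gap n p t \<le> 7230 * ln (real n) + 5" using s2 by simp
  also have "\<dots> \<le> 8000 * (ln (real n))^2"
  proof -
    have "ln (real n) \<le> (ln (real n))^2" using lnn by (simp add: power2_eq_square)
    moreover have "1 \<le> (ln (real n))^2" using lnn by (simp add: one_le_power)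
    ultimately show ?thesis by linarith
  qed
  finally show "avd_expected_gap n p t \<le> 8000 * (ln (real n))^2" .
qed

end
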